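(* Let $\mathbf H\in D$ and $\xi\in T_{\mathbf H}D$, represented by the triple of linear maps $(\phi^{(3)}_\xi,\phi^{(2)}_\xi,\phi^{(1)}_\xi)$. Then $\xi$ is a horizontal vector if and only if $\phi^{(3)}_\xi(H^{(3)})\subseteq H^{(2)}\oplus H^{(0)}$, and in this case $\phi^{(2)}_\xi(H^{(2)})\subseteq H^{(1)}$. Moreover, $\xi$ is transverse if and only if $\phi^{(3)}_\xi(H^{(3)})\subseteq H^{(2)}$. In particular, if $\xi$ is transverse then $\phi^{(p)}_\xi\in\mathrm{Hom}(H^{(p)},H^{(p-1)})$ for $p=1,2,3$.
   Context: $H^3,H^4$ are real vector spaces of dimension $n+1$ with a perfect pairing, $H=H^3\oplus H^4$, $\iota=\mathrm{Id}_{H^3}-\mathrm{Id}_{H^4}$, $Q(u+v,u'+v')=\langle u,v'\rangle-\langle u',v\rangle$ (in the paper, cup product on the cohomology of a compact $G_2$-manifold). $D$ is the set of decompositions $H=H^{(3)}\oplus H^{(2)}\oplus H^{(1)}\oplus H^{(0)}$ with $H^{(3-p)}=\iota(H^{(p)})$, $Q(\iota(H^{(p)}),H^{(q)})=0$ for $p\ne q$, $(-1)^{p+1}Q(\iota(w),w)>0$ for $0\ne w\in H^{(p)}$, $\dim H^{(3)}=1$, $\dim H^{(2)}=n$. $GL(H^3)$ acts on $H$ (naturally on $H^3$, contragrediently on $H^4$, preserving $Q$) and thus on $D$. For $\mathbf H\in D$: $\ell_{\mathbf H}=\{w+\iota(w):w\in H^{(3)}\}\subset H^3$ and $q_{\mathbf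 H}(u)=2Q(\pi^{(0)}u,\pi^{(3)}u)-2Q(\pi^{(1)}u,\pi^{(2)}u)$ ($\pi^{(p)}$ the projections onto $H^{(p)}$), an inner product on $H^3$. A vector $\xi\in T_{\mathbf H}D$ is horizontal iff $\xi=\frac{d}{dt}|_0\exp(ta)\cdot\mathbf H$ for some $q_{\mathbf H}$-self-adjoint $a\in\mathfrak{gl}(H^3)$ (these form the orthogonal complement of the tangent spaces to the fibres of $\mathbf H\mapsto q_{\mathbf H}$ for the natural $GL(H^3)$-invariant metric on $D$); it is transverse iff moreover $a$ can be taken with $q_{\mathbf H}(au,u)=0$ for $u\in\ell_{\mathbf H}$. With $F^{(p)}=H^{(3)}\oplus\dots\oplus H^{(p)}$, a tangent vector $\xi$ represented by a curve $\mathbf H_t$ ($\mathbf H_0=\mathbf H$) determines $\phi^{(p)}_\xi:H^{(p)}\to H^{(p-1)}\oplus\dots\oplus H^{(0)}$, $p=1,2,3$: $\phi^{(p)}_\xi(w)$ is the projection along $F^{(p)}$ of $\frac{d}{dt}|_0w_t$ for any smooth $w_t\in F^{(p)}_t$ with $w_0=w$; the triple determines $\xi$. *)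

theory Defs
  imports "HOL-Analysis.Analysis"
begin

text \<open>Model: H^3 = real^'n (so n+1 = CARD('n)), H^4 = real^'n with the perfect pairing
  given by the dot product; H = H^3 \<oplus> H^4 = real^'n \<times> real^'n.
  A decomposition is a family Hs :: nat \<Rightarrow> H set, of which only Hs 0 .. Hs 3 are used.\<close>

type_synonym ('n) HH = "(real^'n) \<times> (real^'n)"

definition iota :: "('n::finite) HH \<Rightarrow> 'n HH" where
  "iota x = (fst x, - snd x)"

definition Qf :: "'n::finite HH \<Rightarrow> 'n HH \<Rightarrow> real" where
  "Qf x y = fst x \<bullet> snd y - fst y \<bullet> snd x"

definition dsum :: "(nat \<Rightarrow> 'a::real_vector set) \<Rightarrow> bool" where
  "dsum Hs \<longleftrightarrow>
     (\<forall>x. \<exists>f. (\<forall>p::nat\<le>3. f p \<in> Hs p) \<and> x = (\<Sum>p\<le>3. f p)) \<and>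
     (\<forall>f. (\<forall>p::nat\<le>3. f p \<in> Hs p) \<and> (\<Sum>p\<le>3. f p) = 0 \<longrightarrow> (\<forall>p::nat\<le>3. f p = 0))"

definition inD :: "(nat \<Rightarrow> 'n::finite HH set) \<Rightarrow> bool" where
  "inD Hs \<longleftrightarrow>
     (\<forall>p::nat\<le>3. subspace (Hs p)) \<and> dsum Hs \<and>
     (\<forall>p::nat\<le>3. Hs (3 - p) = iota ` Hs p) \<and>
     (\<forall>p::nat\<le>3. \<forall>q::nat\<le>3. p \<noteq> q \<longrightarrow> (\<forall>x\<in>Hs p. \<forall>y\<in>Hs q. Qf (iota x) y = 0)) \<and>
     (\<forall>p::nat\<le>3. \<forall>w\<in>Hs p. w \<noteq> 0 \<longrightarrow> (-1::real) ^ (p + 1) * Qf (iota w) w > 0) \<and>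
     dim (Hs 3) = 1 \<and> dim (Hs 2) = CARD('n) - 1"

definition proj :: "(nat \<Rightarrow> 'n::finite HH set) \<Rightarrow> nat \<Rightarrow> 'n HH \<Rightarrow> 'n HH" where
  "proj Hs p x = (THE y. \<exists>f. (\<forall>q::nat\<le>3. f q \<in> Hs q) \<and> x = (\<Sum>q\<le>3. f q) \<and> y = f p)"

definition Fset :: "(nat \<Rightarrow> 'n::finite HH set) \<Rightarrow> nat \<Rightarrow> 'n HH set" where
  "Fset Hs p = {x. \<exists>f. (\<forall>q\<in>{p..3}. f q \<in> Hs q) \<and> x = (\<Sum>q=p..3. f q)}"

definition projAlongF :: "(nat \<Rightarrow> 'n::finite HH set) \<Rightarrow> nat \<Rightarrow> 'n HH \<Rightarrow> 'n HH" where
  "projAlongF Hs p x = (\<Sum>q<p. proj Hs q x)"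

text \<open>Smooth structure: D is regarded as a subset of End(H)^4 via the projections
  \<pi>^(0..3); a tangent vector at Hs is the derivative at 0 of the projections along a
  curve in D through Hs (differentiable at 0).\<close>
definition tcurve :: "(nat \<Rightarrow> 'n::finite HH set) \<Rightarrow> (real \<Rightarrow> nat \<Rightarrow> 'n HH set) \<Rightarrow> bool" where
  "tcurve Hs c \<longleftrightarrow> (\<forall>p::nat\<le>3. c 0 p = Hs p) \<and> (\<forall>\<^sub>F t in nhds 0. inD (c t)) \<and>
     (\<forall>p::nat\<le>3. \<forall>x. (\<lambda>t. proj (c t) p x) differentiable (at 0))"

definition tvec :: "(real \<Rightarrow> nat \<Rightarrow> 'n::finite HH set) \<Rightarrow> nat \<Rightarrow> 'n HH \<Rightarrow> 'n HH" where
  "tvec c p x = vector_derivative (\<lambda>t. proj (c t) p x) (at 0)"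

definition phi :: "(real \<Rightarrow> nat \<Rightarrow> 'n::finite HH set) \<Rightarrow> nat \<Rightarrow> 'n HH \<Rightarrow> 'n HH" where
  "phi c p w = (THE v. \<forall>wt :: real \<Rightarrow> 'n HH.
      (\<forall>\<^sub>F t in nhds 0. wt t \<in> Fset (c t) p) \<and> wt 0 = w \<and> wt differentiable (at 0)
      \<longrightarrow> projAlongF (c 0) p (vector_derivative wt (at 0)) = v)"

definition lexp :: "(real^'n::finite \<Rightarrow> real^'n) \<Rightarrow> real^'n \<Rightarrow> real^'n" where
  "lexp a u = (\<Sum>k. (1 / fact k) *\<^sub>R (a ^^ k) u)"

definition act :: "(real^'n::finite \<Rightarrow> real^'n) \<Rightarrow> 'n HH \<Rightarrow> 'n HH" where
  "act g x = (g (fst x), adjoint (inv g) (snd x))"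

definition actD :: "(real^'n::finite \<Rightarrow> real^'n) \<Rightarrow> (nat \<Rightarrow> 'n HH set) \<Rightarrow> nat \<Rightarrow> 'n HH set" where
  "actD g Hs = (\<lambda>p. act g ` Hs p)"

definition qH :: "(nat \<Rightarrow> 'n::finite HH set) \<Rightarrow> real^'n \<Rightarrow> real" where
  "qH Hs u = 2 * Qf (proj Hs 0 (u, 0)) (proj Hs 3 (u, 0)) - 2 * Qf (proj Hs 1 (u, 0)) (proj Hs 2 (u, 0))"

definition qHb :: "(nat \<Rightarrow> 'n::finite HH set) \<Rightarrow> real^'n \<Rightarrow> real^'n \<Rightarrow> real" where
  "qHb Hs u v = (qH Hs (u + v) - qH Hs u - qH Hs v) / 2"

definition ell :: "(nat \<Rightarrow> 'n::finite HH set) \<Rightarrow> (real^'n) set" where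
  "ell Hs = {u. \<exists>w\<in>Hs 3. w + iota w = (u, 0)}"

definition qselfadj :: "(nat \<Rightarrow> 'n::finite HH set) \<Rightarrow> (real^'n \<Rightarrow> real^'n) \<Rightarrow> bool" where
  "qselfadj Hs a \<longleftrightarrow> linear a \<and> (\<forall>u v. qHb Hs (a u) v = qHb Hs u (a v))"

definition is_exp_tangent :: "(nat \<Rightarrow> 'n::finite HH set) \<Rightarrow> (real \<Rightarrow> nat \<Rightarrow> 'n HH set) \<Rightarrow> (real^'n \<Rightarrow> real^'n) \<Rightarrow> bool" where
  "is_exp_tangent Hs c a \<longleftrightarrow>
     (\<forall>p::nat\<le>3. \<forall>x. tvec c p x = tvec (\<lambda>t. actD (lexp (\<lambda>u. t *\<^sub>R a u)) Hs) p x)"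

definition horizontal :: "(nat \<Rightarrow> 'n::finite HH set) \<Rightarrow> (real \<Rightarrow> nat \<Rightarrow> 'n HH set) \<Rightarrow> bool" where
  "horizontal Hs c \<longleftrightarrow> (\<exists>a. qselfadj Hs a \<and> is_exp_tangent Hs c a)"

definition transverse :: "(nat \<Rightarrow> 'n::finite HH set) \<Rightarrow> (real \<Rightarrow> nat \<Rightarrow> 'n HH set) \<Rightarrow> bool" where
  "transverse Hs c \<longleftrightarrow> (\<exists>a. qselfadj Hs a \<and> (\<forall>u\<in>ell Hs. qHb Hs (a u) u = 0) \<and> is_exp_tangent Hs c a)"

end

theory Submission
  imports Defs
begin

typedef (overloaded) 'n endo = "UNIV :: ((real^('n::finite)) \<Rightarrow>\<^sub>L (real^'n)) set"
  morphisms Rep_endo Abs_endo by auto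

setup_lifting type_definition_endo

instantiation endo :: (finite) real_normed_algebra_1
begin

lift_definition norm_endo :: "'a endo \<Rightarrow> real" is norm .
lift_definition minus_endo :: "'a endo \<Rightarrow> 'a endo \<Rightarrow> 'a endo" is "(-)" .
lift_definition plus_endo :: "'a endo \<Rightarrow> 'a endo \<Rightarrow> 'a endo" is "(+)" .
lift_definition uminus_endo :: "'a endo \<Rightarrow> 'a endo" is "uminus" .
lift_definition zero_endo :: "'a endo" is "0" .
lift_definition scaleR_endo :: "real \<Rightarrow> 'a endo \<Rightarrow> 'a endo" is "scaleR" .
lift_definition times_endo :: "'a endo \<Rightarrow> 'a endo \<Rightarrow> 'a endo" is "blinfun_compose" .
lift_definition one_endo :: "'a endo" is "id_blinfun" .

definition dist_endo :: "'a endo \<Rightarrow> 'a endo \<Rightarrow> real"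
  where "dist_endo a b = norm (a - b)"

definition uniformity_endo :: "('a endo \<times> 'a endo) filter"
  where "uniformity_endo = (INF e\<in>{0 <..}. principal {(x, y). dist x y < e})"

definition open_endo :: "'a endo set \<Rightarrow> bool"
  where "open_endo S = (\<forall>x\<in>S. \<forall>\<^sub>F (x', y) in uniformity. x' = x \<longrightarrow> y \<in> S)"

definition sgn_endo :: "'a endo \<Rightarrow> 'a endo"
  where "sgn_endo x = scaleR (inverse (norm x)) x"

instance
proof
  fix a b c :: "'a endo" and r s :: real
  show "a + b + c = a + (b + c)" by transfer (simp add: algebra_simps)
  show "a + b = b + a" by transfer (simp add: algebra_simps)
  show "0 + a = a" by transfer simp
  show "- a + a = 0" by transfer simp
  show "a - b = a + - b" by transfer simp
  show "r *\<^sub>R (a + b) = r *\<^sub>R a + r *\<^sub>R b" by transfer (simp add: scaleR_add_right)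
  show "(r + s) *\<^sub>R a = r *\<^sub>R a + s *\<^sub>R a" by transfer (simp add: scaleR_add_left)
  show "r *\<^sub>R s *\<^sub>R a = (r * s) *\<^sub>R a" by transfer simp
  show "1 *\<^sub>R a = a" by transfer simp
  show "a * b * c = a * (b * c)" by transfer (auto intro: blinfun_eqI)
  show "(a + b) * c = a * c + b * c" by transfer (auto intro: blinfun_eqI simp: blinfun.bilinear_simps)
  show "a * (b + c) = a * b + a * c" by transfer (auto intro: blinfun_eqI simp: blinfun.bilinear_simps)
  show "1 * a = a" by transfer (auto intro: blinfun_eqI)
  show "a * 1 = a" by transfer (auto intro: blinfun_eqI)
  show "(0::'a endo) \<noteq> 1"
  proof transfer
    show "(0 :: (real^'a) \<Rightarrow>\<^sub>L _) \<noteq> id_blinfun"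
      using norm_blinfun_id[where 'a="real^'a"] by (metis norm_zero zero_neq_one)
  qed
  show "r *\<^sub>R a * b = r *\<^sub>R (a * b)" by transfer (auto intro: blinfun_eqI simp: blinfun.bilinear_simps)
  show "a * r *\<^sub>R b = r *\<^sub>R (a * b)" by transfer (auto intro: blinfun_eqI simp: blinfun.bilinear_simps)
  show "dist a b = norm (a - b)" by (simp add: dist_endo_def)
  show "sgn a = inverse (norm a) *\<^sub>R a" by (simp add: sgn_endo_def)
  show "(uniformity :: ('a endo \<times> 'a endo) filter) = (INF e\<in>{0 <..}. principal {(x, y). dist x y < e})"
    by (simp add: uniformity_endo_def)
  show "open (U :: 'a endo set) = (\<forall>x\<in>U. \<forall>\<^sub>F (x', y) in uniformity. x' = x \<longrightarrow> y \<in> U)" for U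
    by (simp add: open_endo_def)
  show "(norm a = 0) = (a = 0)" by transfer simp
  show "norm (a + b) \<le> norm a + norm b" by transfer (rule norm_triangle_ineq)
  show "norm (r *\<^sub>R a) = \<bar>r\<bar> * norm a" by transfer simp
  show "norm (a * b) \<le> norm a * norm b" by transfer (rule norm_blinfun_compose)
  show "norm (1::'a endo) = 1" by transfer simp
qed
end

lemma Cauchy_Rep_endo: "Cauchy X \<Longrightarrow> Cauchy (\<lambda>n. Rep_endo (X n))"
  unfolding Cauchy_def dist_norm by (simp add: norm_endo.rep_eq[symmetric] minus_endo.rep_eq[symmetric])

instance endo :: (finite) banach
proof
  fix X :: "nat \<Rightarrow> 'a endo"
  assume "Cauchy X"
  then have "convergent (\<lambda>n. Rep_endo (X n))"
    using Cauchy_Rep_endo Cauchy_convergent by blast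
  then obtain L where L: "(\<lambda>n. Rep_endo (X n)) \<longlonglongrightarrow> L" by (auto simp: convergent_def)
  have "X \<longlonglongrightarrow> Abs_endo L"
    unfolding LIMSEQ_iff
  proof (intro allI impI)
    fix r :: real assume "0 < r"
    from L[unfolded LIMSEQ_iff] \<open>0 < r\<close> obtain N where "\<forall>n\<ge>N. norm (Rep_endo (X n) - L) < r" by blast
    then show "\<exists>N. \<forall>n\<ge>N. norm (X n - Abs_endo L) < r"
      by (auto simp: norm_endo.rep_eq minus_endo.rep_eq Abs_endo_inverse)
  qed
  then show "convergent X" by (auto simp: convergent_def)
qed

definition app :: "'n::finite endo \<Rightarrow> real^'n \<Rightarrow> real^'n" where
  "app X u = blinfun_apply (Rep_endo X) u"

lemma app_times: "app (X * Y) u = app X (app Y u)"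
  by (simp add: app_def times_endo.rep_eq)
lemma app_one: "app 1 u = u"
  by (simp add: app_def one_endo.rep_eq)
lemma app_scaleR: "app (r *\<^sub>R X) u = r *\<^sub>R app X u"
  by (simp add: app_def scaleR_endo.rep_eq blinfun.scaleR_left)
lemma app_power: "app (X ^ n) u = (app X ^^ n) u"
  by (induction n arbitrary: u) (simp_all add: app_one app_times)
lemma bl_app: "bounded_linear (\<lambda>X. app X u)"
proof (rule bounded_linear_intro[where K="norm u"])
  fix X Y :: "'a endo" and r :: real
  show "app (X + Y) u = app X u + app Y u" by (simp add: app_def plus_endo.rep_eq blinfun.add_left)
  show "app (r *\<^sub>R X) u = r *\<^sub>R app X u" by (rule app_scaleR)
  show "norm (app X u) \<le> norm X * norm u"
    by (simp add: app_def norm_endo.rep_eq norm_blinfun)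
qed
lemma linear_app: "linear (app X)"
  unfolding app_def by (rule bounded_linear.linear[OF blinfun.bounded_linear_right])

definition Aof :: "(real^'n \<Rightarrow> real^'n) \<Rightarrow> 'n::finite endo" where
  "Aof a = Abs_endo (Blinfun a)"

lemma app_Aof: "linear a \<Longrightarrow> app (Aof a) = a"
  unfolding app_def Aof_def
  by (simp add: Abs_endo_inverse bounded_linear_Blinfun_apply linear_conv_bounded_linear)

lemma lexp_app:
  assumes "linear a"
  shows "lexp (\<lambda>u. t *\<^sub>R a u) u = app (exp (t *\<^sub>R Aof a)) u"
proof -
  have "app (exp (t *\<^sub>R Aof a)) u = (\<Sum>n. app ((t *\<^sub>R Aof a) ^ n /\<^sub>R fact n) u)"
    unfolding exp_def by (rule bounded_linear.suminf[OF bl_app summable_exp_generic])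
  also have "\<dots> = (\<Sum>n. (1 / fact n) *\<^sub>R ((\<lambda>u. t *\<^sub>R a u) ^^ n) u)"
  proof -
    have "app (t *\<^sub>R Aof a) = (\<lambda>u. t *\<^sub>R a u)"
      by (rule ext) (simp add: app_scaleR app_Aof assms)
    then have "app ((t *\<^sub>R Aof a) ^ n /\<^sub>R fact n) u = (1 / fact n) *\<^sub>R ((\<lambda>u. t *\<^sub>R a u) ^^ n) u" for n
      by (simp only: app_scaleR app_power divide_inverse mult_1)
    then show ?thesis by presburger
  qed
  finally show ?thesis unfolding lexp_def by simp
qed

lemma lexp_inverse:
  assumes "linear a"
  shows "lexp (\<lambda>u. t *\<^sub>R a u) (lexp (\<lambda>u. (- t) *\<^sub>R a u) u) = u"
proof -
  have c: "(t *\<^sub>R Aof a) * ((- t) *\<^sub>R Aof a) = ((- t) *\<^sub>R Aof a) * (t *\<^sub>R Aof a)"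
    by simp
  have "exp (t *\<^sub>R Aof a) * exp ((- t) *\<^sub>R Aof a) = 1"
    using exp_add_commuting[OF c] by (simp add: scaleR_left.minus)
  then show ?thesis
    unfolding lexp_app[OF assms] by (simp add: app_times[symmetric] app_one)
qed

lemma lexp_linear:
  assumes "linear a"
  shows "linear (lexp (\<lambda>u. t *\<^sub>R a u))"
proof -
  have "lexp (\<lambda>u. t *\<^sub>R a u) = app (exp (t *\<^sub>R Aof a))"
    by (rule ext) (simp add: lexp_app[OF assms])
  then show ?thesis by (simp add: linear_app)
qed

lemma lexp_deriv:
  assumes "linear a"
  shows "((\<lambda>t. lexp (\<lambda>u. t *\<^sub>R a u) u) has_vector_derivative a u) (at 0)"
proof -
  have "((\<lambda>t. exp (t *\<^sub>R Aof a)) has_vector_derivative exp (0 *\<^sub>R Aof a) * Aof a) (at 0)"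
    by (rule exp_scaleR_has_vector_derivative_right)
  then have "((\<lambda>t. app (exp (t *\<^sub>R Aof a)) u) has_vector_derivative app (Aof a) u) (at 0)"
    using bounded_linear.has_vector_derivative[OF bl_app] by fastforce
  then show ?thesis by (simp add: lexp_app[OF assms] app_Aof[OF assms])
qed

lemma lexp_deriv_neg:
  assumes "linear a"
  shows "((\<lambda>t. lexp (\<lambda>u. (- t) *\<^sub>R a u) u) has_vector_derivative - a u) (at 0)"
proof -
  have l: "linear (\<lambda>u. - a u)" using assms by (simp add: linear_compose_neg)
  have "(\<lambda>u. (- t) *\<^sub>R a u) = (\<lambda>u. t *\<^sub>R (- a u))" for t by auto
  then show ?thesis using lexp_deriv[OF l, of u] by simp
qed

lemma lexp_zero: "lexp (\<lambda>u. 0 *\<^sub>R a u) u = u"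
proof -
  have "lexp (\<lambda>u. 0 *\<^sub>R a u) u = (\<Sum>k. (1 / fact k) *\<^sub>R ((\<lambda>u. 0) ^^ k) u)"
    by (simp add: lexp_def)
  also have "\<dots> = (\<Sum>k. if k = 0 then u else 0)"
  proof (rule suminf_cong)
    fix k :: nat show "(1 / fact k) *\<^sub>R ((\<lambda>u. 0) ^^ k) u = (if k = 0 then u else 0)"
      by (cases k) simp_all
  qed
  also have "\<dots> = u" using sums_single[of 0 "\<lambda>_. u"] sums_unique by metis
  finally show ?thesis .
qed

definition Bf :: "'n::finite HH \<Rightarrow> 'n HH \<Rightarrow> real" where
  "Bf x y = fst x \<bullet> snd y + fst y \<bullet> snd x"

lemma Bf_sym: "Bf x y = Bf y x" by (simp add: Bf_def)
lemma Bf_add_left[simp]: "Bf (x + y) z = Bf x z + Bf y z" by (simp add: Bf_def inner_add_left inner_add_right)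
lemma Bf_add_right[simp]: "Bf z (x + y) = Bf z x + Bf z y" by (simp add: Bf_def inner_add_left inner_add_right)
lemma Bf_diff_left[simp]: "Bf (x - y) z = Bf x z - Bf y z" by (simp add: Bf_def inner_diff_left inner_diff_right)
lemma Bf_diff_right[simp]: "Bf z (x - y) = Bf z x - Bf z y" by (simp add: Bf_def inner_diff_left inner_diff_right)
lemma Bf_minus_left[simp]: "Bf (- x) z = - Bf x z" by (simp add: Bf_def)
lemma Bf_minus_right[simp]: "Bf z (- x) = - Bf z x" by (simp add: Bf_def)
lemma Bf_scale_left[simp]: "Bf (c *\<^sub>R x) z = c * Bf x z" by (simp add: Bf_def algebra_simps)
lemma Bf_scale_right[simp]: "Bf z (c *\<^sub>R x) = c * Bf z x" by (simp add: Bf_def algebra_simps)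
lemma Bf_zero_left[simp]: "Bf 0 z = 0" by (simp add: Bf_def)
lemma Bf_zero_right[simp]: "Bf z 0 = 0" by (simp add: Bf_def)

lemma fst_iota[simp]: "fst (iota z) = fst z" by (simp add: iota_def)
lemma snd_iota[simp]: "snd (iota z) = - snd z" by (simp add: iota_def)
lemma iota_iota[simp]: "iota (iota x) = x" by (simp add: iota_def)
lemma iota_add[simp]: "iota (x + y) = iota x + iota y" by (simp add: iota_def)
lemma iota_diff[simp]: "iota (x - y) = iota x - iota y" by (simp add: iota_def)
lemma iota_minus[simp]: "iota (- x) = - iota x" by (simp add: iota_def)
lemma iota_scale[simp]: "iota (c *\<^sub>R x) = c *\<^sub>R iota x" by (simp add: iota_def)
lemma iota_zero[simp]: "iota 0 = 0" by (simp add: iota_def zero_prod_def)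
lemma iota_eq_0[simp]: "iota x = 0 \<longleftrightarrow> x = 0" by (simp add: iota_def prod_eq_iff)
lemma linear_iota: "linear iota" by (rule linearI) simp_all
lemma bounded_linear_iota: "bounded_linear iota"
  using linear_iota linear_conv_bounded_linear by blast

lemma Bf_iota_iota[simp]: "Bf (iota x) (iota y) = - Bf x y" by (simp add: Bf_def iota_def)
lemma Bf_iota_left: "Bf (iota x) y = - Bf x (iota y)" by (simp add: Bf_def iota_def)
lemma Qf_Bf: "Qf x y = Bf (iota x) y" by (simp add: Bf_def Qf_def iota_def)

lemma Bf_nondeg: "(\<And>y. Bf z y = 0) \<Longrightarrow> z = 0"
proof -
  assume h: "\<And>y. Bf z y = 0"
  have "Bf z (snd z, fst z) = fst z \<bullet> fst z + snd z \<bullet> snd z" by (simp add: Bf_def inner_commute)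
  then have "fst z \<bullet> fst z + snd z \<bullet> snd z = 0" using h by simp
  then have "fst z = 0 \<and> snd z = 0"
    by (metis add_nonneg_eq_0_iff inner_eq_zero_iff inner_ge_zero)
  then show "z = 0" by (simp add: prod_eq_iff)
qed

lemma self_neg_zero:
  fixes x :: "'a::real_vector"
  assumes "x = - x" shows "x = 0"
proof -
  have "x + x = x + - x" using arg_cong[OF assms, of "\<lambda>y. x + y"] .
  then have "(2::real) *\<^sub>R x = 0" by (simp add: scaleR_2)
  then show ?thesis by simp
qed

definition hat :: "(real^'n::finite \<Rightarrow> real^'n) \<Rightarrow> 'n HH \<Rightarrow> 'n HH" where
  "hat a v = (a (fst v), - adjoint a (snd v))"

lemma hat_io: "linear a \<Longrightarrow> hat a (iota v) = iota (hat a v)"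
  by (simp add: hat_def iota_def linear_neg[OF adjoint_linear])

lemma linear_hat: "linear a \<Longrightarrow> linear (hat a)"
  unfolding hat_def
  by (rule linearI) (simp_all add: linear_add linear_scale adjoint_linear)

lemma hat_skew: "linear a \<Longrightarrow> Bf (hat a v) w = - Bf v (hat a w)"
  by (simp add: hat_def Bf_def adjoint_clauses inner_commute)

lemma hat_exists:
  assumes lin: "linear T" and io: "\<And>v. T (iota v) = iota (T v)"
    and sk: "\<And>v w. Bf (T v) w = - Bf v (T w)"
  shows "\<exists>s. linear s \<and> T = hat s"
proof -
  define s where "s u = fst (T (u, 0))" for u
  have s_lin: "linear s"
  proof (rule linearI)
    fix u v :: "real^'a" and c :: real
    have "(u + v, 0::real^'a) = (u, 0) + (v, 0)" by simp
    then show "s (u + v) = s u + s v" unfolding s_def by (metis fst_add linear_add[OF lin])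
    have "(c *\<^sub>R u, 0::real^'a) = c *\<^sub>R (u, 0)" by simp
    then show "s (c *\<^sub>R u) = c *\<^sub>R s u" unfolding s_def by (metis fst_scaleR linear_scale[OF lin])
  qed
  have T1: "snd (T (u, 0)) = 0" for u
  proof -
    have i: "iota (u, 0) = (u, 0)" by (simp add: iota_def)
    have "T (iota (u, 0)) = iota (T (u, 0))" by (rule io)
    then have "T (u, 0) = iota (T (u, 0))" by (simp only: i)
    then have "snd (T (u, 0)) = snd (iota (T (u, 0)))" by (rule arg_cong)
    then have "snd (T (u, 0)) = - snd (T (u, 0))" by (simp only: snd_iota)
    then show ?thesis by (rule self_neg_zero)
  qed
  have T2: "fst (T (0, y)) = 0" for y
  proof -
    have "iota (0, y) = - (0, y)" by (simp add: iota_def)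
    then have "T (iota (0, y)) = - T (0, y)" by (metis linear_neg[OF lin])
    moreover have "T (iota (0, y)) = iota (T (0, y))" by (rule io)
    ultimately have "iota (T (0, y)) = - T (0, y)" by (simp only:)
    then have "fst (iota (T (0, y))) = fst (- T (0, y))" by (rule arg_cong)
    then have "fst (T (0, y)) = - fst (T (0, y))" by (simp only: fst_iota fst_uminus)
    then show ?thesis by (rule self_neg_zero)
  qed
  have T3: "snd (T (0, y)) = - adjoint s y" for y
  proof -
    have "u \<bullet> snd (T (0, y)) = u \<bullet> (- adjoint s y)" for u
    proof -
      have "Bf (T (u,0)) (0,y) = - Bf (u,0) (T (0,y))" by (rule sk)
      then have "s u \<bullet> y = - (u \<bullet> snd (T (0,y)))" by (simp add: Bf_def s_def T2)
      then show ?thesis by (simp add: adjoint_clauses[OF s_lin])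
    qed
    then show ?thesis by (metis vector_eq_ldot)
  qed
  have "T v = hat s v" for v
  proof -
    have "v = (fst v, 0) + (0, snd v)" by simp
    then have "T v = T (fst v, 0) + T (0, snd v)" by (metis linear_add[OF lin])
    then show ?thesis by (simp add: hat_def prod_eq_iff T1 T2 T3 s_def)
  qed
  then show ?thesis using s_lin by blast
qed

declare One_nat_def [simp del]

locale tang =
  fixes Hs :: "nat \<Rightarrow> 'n::finite HH set" and P D :: "nat \<Rightarrow> 'n HH \<Rightarrow> 'n HH"
  assumes Plin: "p \<le> 3 \<Longrightarrow> linear (P p)"
  and Dlin: "p \<le> 3 \<Longrightarrow> linear (D p)"
  and Psum: "P 0 x + P 1 x + P 2 x + P 3 x = x"
  and PP: "p \<le> 3 \<Longrightarrow> q \<le> 3 \<Longrightarrow> P p (P q x) = (if p = q then P q x else 0)"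
  and Pio: "p \<le> 3 \<Longrightarrow> P (3 - p) x = iota (P p (iota x))"
  and PB: "p \<le> 3 \<Longrightarrow> Bf (P p x) y = Bf x (P p y)"
  and Dsum: "D 0 x + D 1 x + D 2 x + D 3 x = 0"
  and DP: "p \<le> 3 \<Longrightarrow> q \<le> 3 \<Longrightarrow> D p (P q x) + P p (D q x) = (if p = q then D p x else 0)"
  and Dio: "p \<le> 3 \<Longrightarrow> D (3 - p) x = iota (D p (iota x))"
  and DB: "p \<le> 3 \<Longrightarrow> Bf (D p x) y = Bf x (D p y)"
  and Pin: "p \<le> 3 \<Longrightarrow> P p x \<in> Hs p"
  and Pmem: "p \<le> 3 \<Longrightarrow> q \<le> 3 \<Longrightarrow> x \<in> Hs q \<Longrightarrow> P p x = (if p = q then x else 0)"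
  and Pproj: "p \<le> 3 \<Longrightarrow> proj Hs p x = P p x"
begin

lemma Padd: "p \<le> 3 \<Longrightarrow> P p (x + y) = P p x + P p y" using linear_add[OF Plin] by blast
lemma Pdiff: "p \<le> 3 \<Longrightarrow> P p (x - y) = P p x - P p y" using linear_diff[OF Plin] by blast
lemma Pneg: "p \<le> 3 \<Longrightarrow> P p (- x) = - P p x" using linear_neg[OF Plin] by blast
lemma Pscale: "p \<le> 3 \<Longrightarrow> P p (c *\<^sub>R x) = c *\<^sub>R P p x" using linear_scale[OF Plin] by blast
lemma Pzero: "p \<le> 3 \<Longrightarrow> P p 0 = 0" using linear_0[OF Plin] by blast
lemma Dadd: "p \<le> 3 \<Longrightarrow> D p (x + y) = D p x + D p y" using linear_add[OF Dlin] by blast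
lemma Ddiff: "p \<le> 3 \<Longrightarrow> D p (x - y) = D p x - D p y" using linear_diff[OF Dlin] by blast
lemma Dneg: "p \<le> 3 \<Longrightarrow> D p (- x) = - D p x" using linear_neg[OF Dlin] by blast
lemma Dscale: "p \<le> 3 \<Longrightarrow> D p (c *\<^sub>R x) = c *\<^sub>R D p x" using linear_scale[OF Dlin] by blast
lemma Dzero: "p \<le> 3 \<Longrightarrow> D p 0 = 0" using linear_0[OF Dlin] by blast

lemma le3: "0 \<le> (3::nat)" "1 \<le> (3::nat)" "2 \<le> (3::nat)" "3 \<le> (3::nat)" by simp_all

lemmas lin_simps[simp] =
  Padd[OF le3(1)] Padd[OF le3(2)] Padd[OF le3(3)] Padd[OF le3(4)]
  Pdiff[OF le3(1)] Pdiff[OF le3(2)] Pdiff[OF le3(3)] Pdiff[OF le3(4)]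
  Pneg[OF le3(1)] Pneg[OF le3(2)] Pneg[OF le3(3)] Pneg[OF le3(4)]
  Pscale[OF le3(1)] Pscale[OF le3(2)] Pscale[OF le3(3)] Pscale[OF le3(4)]
  Pzero[OF le3(1)] Pzero[OF le3(2)] Pzero[OF le3(3)] Pzero[OF le3(4)]
  Dadd[OF le3(1)] Dadd[OF le3(2)] Dadd[OF le3(3)] Dadd[OF le3(4)]
  Ddiff[OF le3(1)] Ddiff[OF le3(2)] Ddiff[OF le3(3)] Ddiff[OF le3(4)]
  Dneg[OF le3(1)] Dneg[OF le3(2)] Dneg[OF le3(3)] Dneg[OF le3(4)]
  Dscale[OF le3(1)] Dscale[OF le3(2)] Dscale[OF le3(3)] Dscale[OF le3(4)]
  Dzero[OF le3(1)] Dzero[OF le3(2)] Dzero[OF le3(3)] Dzero[OF le3(4)]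

lemma PP_simps[simp]:
  "P 0 (P 0 x) = P 0 x" "P 0 (P 1 x) = 0" "P 0 (P 2 x) = 0" "P 0 (P 3 x) = 0"
  "P 1 (P 0 x) = 0" "P 1 (P 1 x) = P 1 x" "P 1 (P 2 x) = 0" "P 1 (P 3 x) = 0"
  "P 2 (P 0 x) = 0" "P 2 (P 1 x) = 0" "P 2 (P 2 x) = P 2 x" "P 2 (P 3 x) = 0"
  "P 3 (P 0 x) = 0" "P 3 (P 1 x) = 0" "P 3 (P 2 x) = 0" "P 3 (P 3 x) = P 3 x"
  by (simp_all add: PP[OF le3(1)] PP[OF le3(2)] PP[OF le3(3)] PP[OF le3(4)])

lemma P_io:
  "P 0 (iota x) = iota (P 3 x)" "P 1 (iota x) = iota (P 2 x)"
  "P 2 (iota x) = iota (P 1 x)" "P 3 (iota x) = iota (P 0 x)"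
  using Pio[OF le3(4), of "iota x"] Pio[OF le3(3), of "iota x"] Pio[OF le3(2), of "iota x"] Pio[OF le3(1), of "iota x"]
  by (simp_all add: One_nat_def)

lemma D_io:
  "D 0 (iota x) = iota (D 3 x)" "D 1 (iota x) = iota (D 2 x)"
  "D 2 (iota x) = iota (D 1 x)" "D 3 (iota x) = iota (D 0 x)"
  using Dio[OF le3(4), of "iota x"] Dio[OF le3(3), of "iota x"] Dio[OF le3(2), of "iota x"] Dio[OF le3(1), of "iota x"]
  by (simp_all add: One_nat_def)

lemma PD_off: "p \<le> 3 \<Longrightarrow> q \<le> 3 \<Longrightarrow> p \<noteq> q \<Longrightarrow> P p (D q x) = - D p (P q x)"
  using DP[of p q x] by (simp add: eq_neg_iff_add_eq_0 add.commute)

lemma PDP_same: "p \<le> 3 \<Longrightarrow> P p (D p (P p x)) = 0"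
  using DP[of p p "P p x"] by (simp add: PP)

definition J :: "'n HH \<Rightarrow> 'n HH" where
  "J v = P 3 v - P 2 v + P 1 v - P 0 v"

definition X :: "'n HH \<Rightarrow> 'n HH" where
  "X v = D 0 (P 0 v) + D 1 (P 1 v) + D 2 (P 2 v) + D 3 (P 3 v)"

lemma linear_J: "linear J"
  unfolding J_def by (rule linearI) (simp_all add: algebra_simps)
lemma linear_X: "linear X"
  unfolding X_def by (rule linearI) (simp_all add: algebra_simps)

lemma P_J[simp]: "P 0 (J v) = - P 0 v" "P 1 (J v) = P 1 v" "P 2 (J v) = - P 2 v" "P 3 (J v) = P 3 v"
  by (simp_all add: J_def)

lemma J_P[simp]: "J (P 0 v) = - P 0 v" "J (P 1 v) = P 1 v" "J (P 2 v) = - P 2 v" "J (P 3 v) = P 3 v"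
  by (simp_all add: J_def)

lemma JJ[simp]: "J (J v) = v"
proof -
  have "J (J v) = P 3 v + P 2 v + P 1 v + P 0 v" by (simp add: J_def)
  also have "\<dots> = v" using Psum[of v] by (simp add: algebra_simps)
  finally show ?thesis .
qed

lemma J_io: "J (iota v) = - iota (J v)"
  by (simp add: J_def P_io algebra_simps)

lemma JB: "Bf (J x) y = Bf x (J y)"
  by (simp add: J_def PB[OF le3(1)] PB[OF le3(2)] PB[OF le3(3)] PB[OF le3(4)])

lemma X_P[simp]: "X (P 0 v) = D 0 (P 0 v)" "X (P 1 v) = D 1 (P 1 v)" "X (P 2 v) = D 2 (P 2 v)" "X (P 3 v) = D 3 (P 3 v)"
  by (simp_all add: X_def)

lemma X_comm: assumes "q \<le> 3" shows "X (P q v) - P q (X v) = D q v"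
proof -
  have s: "v = P 0 v + P 1 v + P 2 v + P 3 v" using Psum[of v] by simp
  have "q = 0 \<or> q = 1 \<or> q = 2 \<or> q = 3" using assms by auto
  then show ?thesis
  proof (elim disjE)
    assume q: "q = 0"
    have "D 0 v = D 0 (P 0 v) + D 0 (P 1 v) + D 0 (P 2 v) + D 0 (P 3 v)" by (subst s) simp
    then show ?thesis unfolding q X_def
      by (simp add: PD_off PDP_same)
  next
    assume q: "q = 1"
    have "D 1 v = D 1 (P 0 v) + D 1 (P 1 v) + D 1 (P 2 v) + D 1 (P 3 v)" by (subst s) simp
    then show ?thesis unfolding q X_def
      by (simp add: PD_off PDP_same)
  next
    assume q: "q = 2"
    have "D 2 v = D 2 (P 0 v) + D 2 (P 1 v) + D 2 (P 2 v) + D 2 (P 3 v)" by (subst s) simp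
    then show ?thesis unfolding q X_def
      by (simp add: PD_off PDP_same)
  next
    assume q: "q = 3"
    have "D 3 v = D 3 (P 0 v) + D 3 (P 1 v) + D 3 (P 2 v) + D 3 (P 3 v)" by (subst s) simp
    then show ?thesis unfolding q X_def
      by (simp add: PD_off PDP_same)
  qed
qed

lemma X_io: "X (iota v) = iota (X v)"
  by (simp add: X_def P_io D_io algebra_simps)

lemma PDp: "p \<le> 3 \<Longrightarrow> P p (D p w) = D p w - D p (P p w)"
  using DP[of p p w] by (simp add: algebra_simps)

lemma X_skew: "Bf (X v) w = - Bf v (X w)"
proof -
  have "Bf (X v) w = Bf v (P 0 (D 0 w)) + Bf v (P 1 (D 1 w)) + Bf v (P 2 (D 2 w)) + Bf v (P 3 (D 3 w))"
    by (simp add: X_def DB[OF le3(1)] DB[OF le3(2)] DB[OF le3(3)] DB[OF le3(4)]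
                  PB[OF le3(1)] PB[OF le3(2)] PB[OF le3(3)] PB[OF le3(4)])
  also have "\<dots> = Bf v (D 0 w + D 1 w + D 2 w + D 3 w) - Bf v (X w)"
    by (simp add: PDp[OF le3(1)] PDp[OF le3(2)] PDp[OF le3(3)] PDp[OF le3(4)] X_def)
  also have "\<dots> = - Bf v (X w)" by (simp add: Dsum)
  finally show ?thesis .
qed

definition S :: "'n HH \<Rightarrow> 'n HH" where
  "S v = (1/2) *\<^sub>R (X v - J (X (J v)))"

definition C :: "'n HH \<Rightarrow> 'n HH" where
  "C v = (1/2) *\<^sub>R (X v + J (X (J v)))"

lemma J_add: "J (x + y) = J x + J y" using linear_add[OF linear_J] .
lemma J_diff: "J (x - y) = J x - J y" using linear_diff[OF linear_J] .
lemma J_neg: "J (- x) = - J x" using linear_neg[OF linear_J] .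
lemma J_scale: "J (c *\<^sub>R x) = c *\<^sub>R J x" using linear_scale[OF linear_J] .
lemma X_add: "X (x + y) = X x + X y" using linear_add[OF linear_X] .
lemma X_diff: "X (x - y) = X x - X y" using linear_diff[OF linear_X] .
lemma X_neg: "X (- x) = - X x" using linear_neg[OF linear_X] .
lemma X_scale: "X (c *\<^sub>R x) = c *\<^sub>R X x" using linear_scale[OF linear_X] .
lemmas JX_lin = J_add J_diff J_neg J_scale X_add X_diff X_neg X_scale

lemma linear_S: "linear S"
  unfolding S_def by (rule linearI) (simp_all add: JX_lin algebra_simps)
lemma linear_C: "linear C"
  unfolding C_def by (rule linearI) (simp_all add: JX_lin algebra_simps)

lemma half_sum: "(1/2::real) *\<^sub>R (a - b) + (1/2::real) *\<^sub>R (a + b) = (a::'a::real_vector)"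
proof -
  have "(1/2::real) *\<^sub>R (a - b) + (1/2::real) *\<^sub>R (a + b) = ((1/2::real) + 1/2) *\<^sub>R a"
    by (simp only: scaleR_diff_right scaleR_add_right scaleR_add_left) simp
  then show ?thesis by simp
qed

lemma X_SC: "X v = S v + C v"
  unfolding S_def C_def by (rule half_sum[symmetric])

lemma S_io: "S (iota v) = iota (S v)"
  by (simp add: S_def J_io X_io JX_lin)

lemma S_skew: "Bf (S v) w = - Bf v (S w)"
  by (simp add: S_def X_skew JB algebra_simps JX_lin)

lemma JS: "J (S v) = - S (J v)"
  by (simp add: S_def JX_lin algebra_simps)

lemma PB_self: "p \<le> 3 \<Longrightarrow> Bf (P p x) x = Bf (P p x) (P p x)"
  using PB[of p "P p x" x] PP[of p p x] by simp

lemma qH_J: "qH Hs u = Bf (J (u, 0)) (u, 0)"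
proof -
  define U where "U = (u, 0 :: real^'n)"
  have iU: "iota U = U" by (simp add: U_def iota_def)
  have p0: "P 0 U = iota (P 3 U)" using P_io(1)[of U] iU by simp
  have p1: "P 1 U = iota (P 2 U)" using P_io(2)[of U] iU by simp
  have "qH Hs u = 2 * Bf (P 3 U) (P 3 U) - 2 * Bf (P 2 U) (P 2 U)"
    unfolding qH_def U_def[symmetric]
    by (simp add: Pproj Qf_Bf p0 p1)
  moreover have "Bf (J U) U = Bf (P 3 U) (P 3 U) - Bf (P 2 U) (P 2 U) + Bf (P 1 U) (P 1 U) - Bf (P 0 U) (P 0 U)"
    unfolding J_def
    by (simp add: PB_self[OF le3(1)] PB_self[OF le3(2)] PB_self[OF le3(3)] PB_self[OF le3(4)])
  then have "Bf (J U) U = 2 * Bf (P 3 U) (P 3 U) - 2 * Bf (P 2 U) (P 2 U)"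
    by (simp add: p0 p1)
  ultimately show ?thesis by (simp add: U_def)
qed

lemma qHb_J: "qHb Hs u v = Bf (J (u, 0)) (v, 0)"
proof -
  have e: "(u + v, 0 :: real^'n) = (u, 0) + (v, 0)" by simp
  have sy: "Bf (J (v, 0)) (u,0) = Bf (J (u, 0)) (v, 0)" by (metis JB Bf_sym)
  have "Bf (J (u+v,0)) (u+v,0) = Bf (J (u,0) + J (v,0)) ((u,0) + (v,0))" by (simp only: e J_add)
  also have "\<dots> = Bf (J (u,0)) (u,0) + Bf (J (u,0)) (v,0) + Bf (J (v,0)) (u,0) + Bf (J (v,0)) (v,0)"
    by (simp only: Bf_add_left Bf_add_right add.assoc)
  finally show ?thesis unfolding qHb_def qH_J by (simp add: sy)
qed

lemma qselfadj_J:
  assumes lin: "linear a" and sa: "qselfadj Hs a"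
  shows "J (hat a v) = - hat a (J v)"
proof -
  define M where "M v = J (hat a v) + hat a (J v)" for v
  have Mlin: "linear M" unfolding M_def
    by (intro linear_compose_add linear_compose[unfolded o_def, OF linear_hat[OF lin] linear_J]
        linear_compose[unfolded o_def, OF linear_J linear_hat[OF lin]])
  have Mio: "M (iota v) = - iota (M v)" for v
    by (simp add: M_def hat_io[OF lin] J_io linear_neg[OF linear_hat[OF lin]])
  have M3: "M (u, 0) = 0" for u
  proof -
    have i: "iota (u, 0) = (u, 0)" by (simp add: iota_def)
    have "M (u,0) = - iota (M (u, 0))" using Mio[of "(u,0)"] by (simp only: i)
    then have f: "fst (M (u, 0)) = 0"
      using self_neg_zero[of "fst (M (u,0))"] by (metis fst_iota fst_uminus)
    have "Bf (M (u,0)) (y, 0) = 0" for y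
    proof -
      have "Bf (M (u,0)) (y, 0) = Bf (hat a (u,0)) (J (y,0)) - Bf (J (u,0)) (hat a (y,0))"
        by (simp add: M_def JB hat_skew[OF lin])
      also have "\<dots> = qHb Hs y (a u) - qHb Hs u (a y)"
        by (simp add: qHb_J hat_def Bf_sym linear_0[OF adjoint_linear[OF lin]])
      also have "\<dots> = 0" using sa unfolding qselfadj_def by (metis qHb_J JB Bf_sym diff_self)
      finally show ?thesis .
    qed
    from this[of "snd (M (u,0))"] have "snd (M (u,0)) \<bullet> snd (M (u,0)) = 0"
      by (simp add: Bf_def f)
    then show ?thesis using f by (simp add: prod_eq_iff)
  qed
  have M4: "M (0, y) = 0" for y
  proof -
    have j: "J (J (0, y)) = (0, y)" by simp
    have i: "iota (J (0, y)) = J (0, y)"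
    proof -
      have "iota (0, y) = - (0, y)" by (simp add: iota_def)
      then have "J (iota (0, y)) = - J (0, y)" by (metis J_neg)
      then show ?thesis using J_io[of "(0,y)"] by (metis iota_minus iota_iota neg_equal_iff_equal)
    qed
    have "snd (J (0, y)) = 0"
      using arg_cong[OF i, of snd] self_neg_zero by (metis snd_iota)
    then have e: "J (0, y) = (fst (J (0, y)), 0)" by (simp add: prod_eq_iff)
    have "M (0, y) = J (M (J (0, y)))"
      by (simp add: M_def J_add)
    also have "\<dots> = 0" by (subst e) (simp add: M3 linear_0[OF linear_J])
    finally show ?thesis .
  qed
  have "v = (fst v, 0) + (0, snd v)" by simp
  then have "M v = M (fst v, 0) + M (0, snd v)" by (metis linear_add[OF Mlin])
  then have "M v = 0" by (simp add: M3 M4)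
  then show ?thesis unfolding M_def by (simp add: eq_neg_iff_add_eq_0)
qed

lemma S_qselfadj:
  assumes lin: "linear s" and Sh: "S = hat s"
  shows "qselfadj Hs s"
  unfolding qselfadj_def
proof (intro conjI allI lin)
  fix u v
  have "qHb Hs (s u) v = Bf (J (S (u, 0))) (v, 0)" by (simp add: qHb_J Sh hat_def linear_0[OF adjoint_linear[OF lin]])
  also have "\<dots> = Bf (J (u, 0)) (S (v, 0))"
    by (simp add: JS S_skew)
  also have "\<dots> = qHb Hs u (s v)" by (simp add: qHb_J Sh hat_def linear_0[OF adjoint_linear[OF lin]])
  finally show "qHb Hs (s u) v = qHb Hs u (s v)" .
qed

lemma form_ell:
  assumes lin: "linear T" and io: "\<And>v. T (iota v) = iota (T v)"
    and sk: "\<And>v w. Bf (T v) w = - Bf v (T w)" and w: "w \<in> Hs 3"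
  shows "Bf (J (T (w + iota w))) (w + iota w) = - 2 * Bf (P 0 (T w)) (iota w)"
proof -
  have Jw: "J w = w" using Pmem[of _ 3 w] w by (simp add: J_def)
  have Jiw: "J (iota w) = - iota w" by (simp add: J_io Jw)
  have P0iw: "P 0 (iota w) = iota w" using Pmem[of _ 3 w] w by (simp add: P_io)
  have z1: "Bf (T w) w = 0" using sk[of w w] Bf_sym[of w "T w"] by simp
  have z2: "Bf (T (iota w)) (iota w) = 0" using sk[of "iota w" "iota w"] Bf_sym[of "iota w" "T (iota w)"] by simp
  have "Bf (J (T (w + iota w))) (w + iota w) = Bf (T (w + iota w)) (J (w + iota w))" by (rule JB)
  also have "\<dots> = Bf (T w) w - Bf (T w) (iota w) + Bf (T (iota w)) w - Bf (T (iota w)) (iota w)"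
    by (simp add: J_add Jw Jiw linear_add[OF lin] algebra_simps)
  also have "\<dots> = - 2 * Bf (T w) (iota w)"
    by (simp add: z1 z2 io Bf_iota_left)
  also have "Bf (T w) (iota w) = Bf (P 0 (T w)) (iota w)"
    using PB[of 0 "T w" "iota w"] P0iw by simp
  finally show ?thesis .
qed

context
  assumes H1: "\<And>w. P 1 (D 3 (P 3 w)) = 0"
begin

lemma D1P3: "D 1 (P 3 y) = 0"
  using PD_off[of 1 3 "P 3 y"] H1[of y] by simp

lemma Z31: "P 3 (D 1 (P 1 v)) = 0"
proof (rule Bf_nondeg)
  fix y
  have "Bf (P 3 (D 1 (P 1 v))) y = Bf v (P 1 (D 1 (P 3 y)))"
    by (simp add: PB[OF le3(4)] PB[OF le3(2)] DB[OF le3(2)])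
  then show "Bf (P 3 (D 1 (P 1 v))) y = 0" by (simp add: D1P3)
qed

lemma P0_via: "P 0 z = iota (P 3 (iota z))" using P_io(1)[of "iota z"] by simp
lemma P2_via: "P 2 z = iota (P 1 (iota z))" using P_io(3)[of "iota z"] by simp

lemma Z02: "P 0 (D 2 (P 2 v)) = 0"
proof -
  have "iota (D 2 (P 2 v)) = D 1 (P 1 (iota v))"
    using D_io(2)[of "P 2 v"] P_io(2)[of v] by simp
  then show ?thesis by (simp add: P0_via Z31)
qed

lemma Z20: "P 2 (D 0 (P 0 v)) = 0"
proof -
  have "iota (D 0 (P 0 v)) = D 3 (P 3 (iota v))"
    using D_io(4)[of "P 0 v"] P_io(4)[of v] by simp
  then show ?thesis by (simp add: P2_via H1)
qed

lemma C_block: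
  "P 1 (C (P 0 v)) = 0" "P 2 (C (P 0 v)) = 0" "P 3 (C (P 0 v)) = 0"
  "P 0 (C (P 1 v)) = 0" "P 2 (C (P 1 v)) = 0" "P 3 (C (P 1 v)) = 0"
  "P 0 (C (P 2 v)) = 0" "P 1 (C (P 2 v)) = 0" "P 3 (C (P 2 v)) = 0"
  "P 0 (C (P 3 v)) = 0" "P 1 (C (P 3 v)) = 0" "P 2 (C (P 3 v)) = 0"
  by (simp_all add: C_def H1 Z31 Z02 Z20 JX_lin)

lemma C_add: "C (x + y) = C x + C y" using linear_add[OF linear_C] .

lemma C_comm: assumes "q \<le> 3" shows "C (P q v) = P q (C v)"
proof -
  have s: "\<And>z. z = P 0 z + P 1 z + P 2 z + P 3 z" using Psum by simp
  have a: "C (P q v) = P 0 (C (P q v)) + P 1 (C (P q v)) + P 2 (C (P q v)) + P 3 (C (P q v))"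
    by (rule s)
  have b: "P q (C v) = P q (C (P 0 v)) + P q (C (P 1 v)) + P q (C (P 2 v)) + P q (C (P 3 v))"
    by (subst s[of v]) (simp add: C_add linear_add[OF Plin[OF assms]])
  have "q = 0 \<or> q = 1 \<or> q = 2 \<or> q = 3" using assms by auto
  then show ?thesis using a b by (elim disjE) (simp_all add: C_block)
qed

lemma D_S: assumes "q \<le> 3" shows "D q v = S (P q v) - P q (S v)"
proof -
  have "D q v = X (P q v) - P q (X v)" using X_comm[OF assms] by simp
  also have "\<dots> = S (P q v) + C (P q v) - P q (S v) - P q (C v)"
    by (simp add: X_SC linear_add[OF Plin[OF assms]])
  also have "\<dots> = S (P q v) - P q (S v)" by (simp add: C_comm[OF assms])
  finally show ?thesis .
qed

end

end

declare One_nat_def [simp del]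

lemma atMost3: "{..3::nat} = {0,1,2,3}" by auto
lemma sum4: "(\<Sum>q\<le>3::nat. f q) = f 0 + f 1 + f 2 + f 3"
  by (simp add: atMost3 add.assoc)

definition dsS :: "(nat \<Rightarrow> 'n::finite HH set) \<Rightarrow> bool" where
  "dsS Hs \<longleftrightarrow> dsum Hs \<and> (\<forall>p\<le>3. subspace (Hs p))"

lemma proj_char:
  assumes ds: "dsS Hs" and f: "\<forall>q\<le>3. f q \<in> Hs q" and x: "x = (\<Sum>q\<le>3. f q)" and p: "p \<le> 3"
  shows "proj Hs p x = f p"
  unfolding proj_def
proof (rule the_equality)
  show "\<exists>g. (\<forall>q\<le>3. g q \<in> Hs q) \<and> x = (\<Sum>q\<le>3. g q) \<and> f p = g p" using f x by blast
next
  fix y assume "\<exists>g. (\<forall>q\<le>3. g q \<in> Hs q) \<and> x = (\<Sum>q\<le>3. g q) \<and> y = g p"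
  then obtain g where g: "\<forall>q\<le>3. g q \<in> Hs q" "x = (\<Sum>q\<le>3. g q)" "y = g p" by blast
  have sub: "\<forall>p\<le>3. subspace (Hs p)" using ds unfolding dsS_def by (rule conjunct2)
  have uniq: "\<forall>f. (\<forall>p\<le>3. f p \<in> Hs p) \<and> (\<Sum>p\<le>3. f p) = 0 \<longrightarrow> (\<forall>p\<le>3. f p = 0)"
    using ds unfolding dsS_def dsum_def by (elim conjE)
  have h1: "\<forall>q\<le>3. (\<lambda>q. f q - g q) q \<in> Hs q"
  proof (intro allI impI)
    fix q :: nat assume q: "q \<le> 3"
    show "(\<lambda>q. f q - g q) q \<in> Hs q"
      using subspace_diff[OF sub[rule_format, OF q] f[rule_format, OF q] g(1)[rule_format, OF q]] by simp
  qed
  have h2: "(\<Sum>q\<le>3. (\<lambda>q. f q - g q) q) = 0" using x g(2) by (simp add: sum_subtractf)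
  have "(\<lambda>q. f q - g q) p = 0" using uniq[rule_format, OF conjI[OF h1 h2]] p by blast
  then show "y = f p" using g(3) by simp
qed

lemma proj_ex:
  assumes "dsS Hs" shows "\<exists>f. (\<forall>q\<le>3. f q \<in> Hs q) \<and> x = (\<Sum>q\<le>3. f q)"
  using assms unfolding dsS_def dsum_def by blast

lemma proj_in: assumes "dsS Hs" "p \<le> 3" shows "proj Hs p x \<in> Hs p"
proof -
  obtain f where f: "\<forall>q\<le>3. f q \<in> Hs q" "x = (\<Sum>q\<le>3. f q)" using proj_ex[OF assms(1)] by blast
  then show ?thesis using proj_char[OF assms(1) f assms(2)] assms(2) by simp
qed

lemma proj_sum: assumes "dsS Hs" shows "(\<Sum>q\<le>3. proj Hs q x) = x"
proof -
  obtain f where f: "\<forall>q\<le>3. f q \<in> Hs q" "x = (\<Sum>q\<le>3. f q)" using proj_ex[OF assms(1)] by blast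
  have "(\<Sum>q\<le>3. proj Hs q x) = (\<Sum>q\<le>3. f q)"
    by (rule sum.cong) (auto intro: proj_char[OF assms(1) f])
  then show ?thesis using f by simp
qed

lemma proj_mem:
  assumes ds: "dsS Hs" and p: "p \<le> 3" and q: "q \<le> 3" and x: "x \<in> Hs q"
  shows "proj Hs p x = (if p = q then x else 0)"
proof -
  have h1: "\<forall>r\<le>3. (\<lambda>r. if r = q then x else 0) r \<in> Hs r"
    using ds x unfolding dsS_def by (simp add: subspace_0)
  have h2: "x = (\<Sum>r\<le>3. (\<lambda>r. if r = q then x else 0) r)"
    using q by (simp add: sum.delta)
  show ?thesis using proj_char[OF ds h1 h2 p] by simp
qed

lemma proj_linear: assumes ds: "dsS Hs" and p: "p \<le> 3" shows "linear (proj Hs p)"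
proof (rule linearI)
  fix x y :: "'a HH" and c :: real
  have sub: "\<forall>q\<le>3. subspace (Hs q)" using ds unfolding dsS_def by blast
  have h1: "\<forall>q\<le>3. (\<lambda>q. proj Hs q x + proj Hs q y) q \<in> Hs q"
  proof (intro allI impI)
    fix q :: nat assume q: "q \<le> 3"
    show "(\<lambda>q. proj Hs q x + proj Hs q y) q \<in> Hs q"
      using subspace_add[OF sub[rule_format, OF q] proj_in[OF ds q] proj_in[OF ds q]] by simp
  qed
  have h2: "x + y = (\<Sum>q\<le>3. (\<lambda>q. proj Hs q x + proj Hs q y) q)"
    by (simp add: sum.distrib proj_sum[OF ds])
  show "proj Hs p (x + y) = proj Hs p x + proj Hs p y"
    using proj_char[OF ds h1 h2 p] by simp
  have h3: "\<forall>q\<le>3. (\<lambda>q. c *\<^sub>R proj Hs q x) q \<in> Hs q"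
  proof (intro allI impI)
    fix q :: nat assume q: "q \<le> 3"
    show "(\<lambda>q. c *\<^sub>R proj Hs q x) q \<in> Hs q"
      using subspace_scale[OF sub[rule_format, OF q] proj_in[OF ds q]] by simp
  qed
  have h4: "c *\<^sub>R x = (\<Sum>q\<le>3. (\<lambda>q. c *\<^sub>R proj Hs q x) q)"
    by (simp add: scaleR_sum_right[symmetric] proj_sum[OF ds])
  show "proj Hs p (c *\<^sub>R x) = c *\<^sub>R proj Hs p x"
    using proj_char[OF ds h3 h4 p] by simp
qed

lemma proj_proj:
  assumes ds: "dsS Hs" and p: "p \<le> 3" and q: "q \<le> 3"
  shows "proj Hs p (proj Hs q x) = (if p = q then proj Hs q x else 0)"
  using proj_mem[OF ds p q proj_in[OF ds q]] .

lemma proj_cong: "(\<And>p. p \<le> 3 \<Longrightarrow> Hs' p = Hs p) \<Longrightarrow> proj Hs' = proj Hs"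
  unfolding proj_def by (intro ext) (simp cong: conj_cong)

lemma inD_dsS: "inD Hs \<Longrightarrow> dsS Hs"
  unfolding inD_def dsS_def by blast

lemma inD_io:
  assumes D: "inD Hs" and p: "p \<le> 3"
  shows "proj Hs (3 - p) x = iota (proj Hs p (iota x))"
proof -
  have ds: "dsS Hs" using D by (rule inD_dsS)
  have HS0: "\<forall>p\<le>3. Hs (3 - p) = iota ` Hs p" using D unfolding inD_def by blast
  have HS: "Hs r = iota ` Hs (3 - r)" if r: "r \<le> 3" for r
  proof -
    have "Hs (3 - (3 - r)) = iota ` Hs (3 - r)" using HS0 by simp
    moreover have "3 - (3 - r) = r" using r by simp
    ultimately show ?thesis by simp
  qed
  define f where "f r = iota (proj Hs (3 - r) (iota x))" for r
  have "\<forall>r\<le>3. f r \<in> Hs r"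
  proof (intro allI impI)
    fix r :: nat assume r: "r \<le> 3"
    have "proj Hs (3 - r) (iota x) \<in> Hs (3 - r)" by (rule proj_in[OF ds]) simp
    then show "f r \<in> Hs r" unfolding f_def HS[OF r] by (rule imageI)
  qed
  moreover have "x = (\<Sum>r\<le>3. f r)"
  proof -
    have "(\<Sum>r\<le>3. f r) = iota (proj Hs 3 (iota x) + proj Hs 2 (iota x) + proj Hs 1 (iota x) + proj Hs 0 (iota x))"
      by (simp add: sum4 f_def One_nat_def)
    also have "\<dots> = iota (iota x)" using proj_sum[OF ds, of "iota x"] by (simp add: sum4 algebra_simps)
    finally show ?thesis by simp
  qed
  ultimately have "proj Hs (3 - p) x = f (3 - p)" using proj_char[OF ds] by simp
  then show ?thesis using p by (simp add: f_def)
qed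

lemma inD_orth:
  assumes D: "inD Hs" and p: "p \<le> 3" and q: "q \<le> 3" and pq: "p \<noteq> q"
    and x: "x \<in> Hs p" and y: "y \<in> Hs q"
  shows "Bf x y = 0"
  using D x y p q pq unfolding inD_def Qf_Bf by auto

lemma inD_PB:
  assumes D: "inD Hs" and p: "p \<le> 3"
  shows "Bf (proj Hs p x) y = Bf x (proj Hs p y)"
proof -
  have ds: "dsS Hs" using D by (rule inD_dsS)
  have a: "Bf (proj Hs p x) (proj Hs q y) = (if q = p then Bf (proj Hs p x) (proj Hs p y) else 0)" if "q \<le> 3" for q
    using inD_orth[OF D p that _ proj_in[OF ds p] proj_in[OF ds that]] by auto
  have b: "Bf (proj Hs q x) (proj Hs p y) = (if q = p then Bf (proj Hs p x) (proj Hs p y) else 0)" if "q \<le> 3" for q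
    using inD_orth[OF D that p _ proj_in[OF ds that] proj_in[OF ds p]] by auto
  have p4: "p = 0 \<or> p = 1 \<or> p = 2 \<or> p = 3" using p by auto
  have "Bf (proj Hs p x) y = Bf (proj Hs p x) (proj Hs 0 y + proj Hs 1 y + proj Hs 2 y + proj Hs 3 y)"
    using proj_sum[OF ds, of y] by (simp add: sum4)
  also have "\<dots> = Bf (proj Hs p x) (proj Hs p y)"
    using a[of 0] a[of 1] a[of 2] a[of 3] p4 by auto
  also have "\<dots> = Bf (proj Hs 0 x + proj Hs 1 x + proj Hs 2 x + proj Hs 3 x) (proj Hs p y)"
    using b[of 0] b[of 1] b[of 2] b[of 3] p4 by auto
  also have "\<dots> = Bf x (proj Hs p y)"
    using proj_sum[OF ds, of x] by (simp add: sum4)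
  finally show ?thesis .
qed

declare One_nat_def [simp del]

lemma vd_transform:
  assumes "\<forall>\<^sub>F t in nhds 0. f t = g t" "(f has_vector_derivative f') (at (0::real))"
  shows "(g has_vector_derivative f') (at 0)"
proof -
  obtain S where "open S" "0 \<in> S" "\<forall>t\<in>S. f t = g t" using assms(1) unfolding eventually_nhds by blast
  then show ?thesis using has_vector_derivative_transform_within_open[OF assms(2)] by blast
qed

lemma vd_unique_ev:
  assumes "\<forall>\<^sub>F t in nhds 0. f t = g t" "(f has_vector_derivative a) (at (0::real))"
    "(g has_vector_derivative b) (at 0)"
  shows "a = b"
  using vd_transform[OF assms(1,2)] assms(3) vector_derivative_unique_at by blast

lemma deriv_linear:
  fixes F :: "real \<Rightarrow> 'a::real_vector \<Rightarrow> 'b::real_normed_vector"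
  assumes ev: "\<forall>\<^sub>F t in nhds 0. linear (F t)"
    and dF: "\<And>x. ((\<lambda>t. F t x) has_vector_derivative DF x) (at 0)"
  shows "linear DF"
proof (rule linearI)
  fix x y :: 'a and c :: real
  have "((\<lambda>t. F t x + F t y) has_vector_derivative DF x + DF y) (at 0)"
    using dF[of x] dF[of y] by (rule has_vector_derivative_add)
  moreover have "\<forall>\<^sub>F t in nhds 0. F t x + F t y = F t (x + y)"
    using ev by (rule eventually_mono) (simp add: linear_add)
  ultimately show "DF (x + y) = DF x + DF y" using vd_unique_ev dF[of "x + y"] by metis
  have "((\<lambda>t. c *\<^sub>R F t x) has_vector_derivative c *\<^sub>R DF x) (at 0)"
    using bounded_linear.has_vector_derivative[OF bounded_linear_scaleR_right dF[of x]] .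
  moreover have "\<forall>\<^sub>F t in nhds 0. c *\<^sub>R F t x = F t (c *\<^sub>R x)"
    using ev by (rule eventually_mono) (simp add: linear_scale)
  ultimately show "DF (c *\<^sub>R x) = c *\<^sub>R DF x" using vd_unique_ev dF[of "c *\<^sub>R x"] by metis
qed

lemma lin_rep: "linear L \<Longrightarrow> L v = (\<Sum>i\<in>Basis. (v \<bullet> i) *\<^sub>R L (i::'a::euclidean_space))"
proof -
  assume l: "linear L"
  have "L v = L (\<Sum>i\<in>Basis. (v \<bullet> i) *\<^sub>R i)" by (simp add: euclidean_representation)
  also have "\<dots> = (\<Sum>i\<in>Basis. (v \<bullet> i) *\<^sub>R L i)" by (simp add: linear_sum[OF l] linear_scale[OF l])
  finally show ?thesis .
qed

lemma deriv_apply: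
  fixes F :: "real \<Rightarrow> 'a::euclidean_space \<Rightarrow> 'b::real_normed_vector"
  assumes ev: "\<forall>\<^sub>F t in nhds 0. linear (F t)"
    and dF: "\<And>x. ((\<lambda>t. F t x) has_vector_derivative DF x) (at 0)"
    and dy: "(y has_vector_derivative y') (at 0)"
  shows "((\<lambda>t. F t (y t)) has_vector_derivative (DF (y 0) + F 0 y')) (at 0)"
proof -
  have lin0: "linear (F 0)" using eventually_nhds_x_imp_x[OF ev] .
  have linD: "linear DF" by (rule deriv_linear[OF ev dF])
  have di: "((\<lambda>t. y t \<bullet> i) has_field_derivative (y' \<bullet> i)) (at 0)" for i
    using bounded_linear.has_vector_derivative[OF bounded_linear_inner_left dy]
    by (simp add: has_real_derivative_iff_has_vector_derivative)
  have d1: "((\<lambda>t. \<Sum>i\<in>Basis. (y t \<bullet> i) *\<^sub>R F t i) has_vector_derivative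
      (\<Sum>i\<in>Basis. (y 0 \<bullet> i) *\<^sub>R DF i + (y' \<bullet> i) *\<^sub>R F 0 i)) (at 0)"
    by (rule has_vector_derivative_sum, rule has_vector_derivative_scaleR[OF di dF])
  have "(\<Sum>i\<in>Basis. (y 0 \<bullet> i) *\<^sub>R DF i + (y' \<bullet> i) *\<^sub>R F 0 i) = DF (y 0) + F 0 y'"
    by (simp add: sum.distrib lin_rep[OF linD, symmetric] lin_rep[OF lin0, symmetric])
  moreover have "\<forall>\<^sub>F t in nhds 0. (\<Sum>i\<in>Basis. (y t \<bullet> i) *\<^sub>R F t i) = F t (y t)"
    using ev by (rule eventually_mono) (simp add: lin_rep[symmetric])
  ultimately show ?thesis using vd_transform d1 by metis
qed

declare One_nat_def [simp del]

lemma adj_rep: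
  fixes f :: "real^'n::finite \<Rightarrow> real^'n"
  shows "linear f \<Longrightarrow> adjoint f y = (\<Sum>i\<in>Basis. (y \<bullet> f i) *\<^sub>R i)"
proof -
  assume l: "linear f"
  have "adjoint f y = (\<Sum>i\<in>Basis. (adjoint f y \<bullet> i) *\<^sub>R i)" by (simp add: euclidean_representation)
  then show ?thesis by (simp add: adjoint_clauses[OF l])
qed

lemma proj_act:
  fixes Hs :: "nat \<Rightarrow> 'n::finite HH set" and G G' :: "'n HH \<Rightarrow> 'n HH"
  assumes ds: "dsS Hs" and lG: "linear G" and lG': "linear G'"
    and GG': "\<And>v. G (G' v) = v" and G'G: "\<And>v. G' (G v) = v" and p: "p \<le> 3"
  shows "proj (\<lambda>q. G ` Hs q) p x = G (proj Hs p (G' x))"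
proof -
  have sub: "\<forall>q\<le>3. subspace (Hs q)" using ds unfolding dsS_def by (rule conjunct2)
  have sub': "\<forall>q\<le>3. subspace (G ` Hs q)"
    using sub linear_subspace_image[OF lG] by blast
  have ex: "\<exists>f. (\<forall>q\<le>3. f q \<in> G ` Hs q) \<and> x = (\<Sum>q\<le>3. f q)" for x
  proof (intro exI conjI)
    show "\<forall>q\<le>3. G (proj Hs q (G' x)) \<in> G ` Hs q" using proj_in[OF ds] by blast
    show "x = (\<Sum>q\<le>3. G (proj Hs q (G' x)))"
      by (simp add: linear_sum[OF lG, symmetric] proj_sum[OF ds] GG')
  qed
  have un: "\<forall>f. (\<forall>q\<le>3. f q \<in> G ` Hs q) \<and> (\<Sum>q\<le>3. f q) = 0 \<longrightarrow> (\<forall>q\<le>3. f q = 0)"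
  proof (intro allI impI)
    fix f :: "nat \<Rightarrow> 'n HH" and q :: nat
    assume h: "(\<forall>q\<le>3. f q \<in> G ` Hs q) \<and> (\<Sum>q\<le>3. f q) = 0" and q: "q \<le> 3"
    have h1: "\<forall>r\<le>3. (\<lambda>r. G' (f r)) r \<in> Hs r"
      using h G'G by auto
    have h2: "0 = (\<Sum>r\<le>3. (\<lambda>r. G' (f r)) r)"
      using h by (simp add: linear_sum[OF lG', symmetric] linear_0[OF lG'])
    have "proj Hs q 0 = G' (f q)" using proj_char[OF ds h1 h2 q] by simp
    then have "G' (f q) = 0" using linear_0[OF proj_linear[OF ds q]] by simp
    then show "f q = 0" using GG'[of "f q"] linear_0[OF lG] by simp
  qed
  have ds': "dsS (\<lambda>q. G ` Hs q)" unfolding dsS_def dsum_def using ex un sub' by blast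
  have h1: "\<forall>q\<le>3. (\<lambda>q. G (proj Hs q (G' x))) q \<in> G ` Hs q" using proj_in[OF ds] by blast
  have h2: "x = (\<Sum>q\<le>3. (\<lambda>q. G (proj Hs q (G' x))) q)"
    by (simp add: linear_sum[OF lG, symmetric] proj_sum[OF ds] GG')
  show ?thesis using proj_char[OF ds' h1 h2 p] by simp
qed

lemma adj_inv:
  fixes g h :: "real^'n::finite \<Rightarrow> real^'n"
  assumes lg: "linear g" and lh: "linear h" and gh: "\<And>u. g (h u) = u"
  shows "adjoint h (adjoint g y) = y"
proof -
  have "z \<bullet> adjoint h (adjoint g y) = z \<bullet> y" for z
    by (simp add: adjoint_clauses[OF lh] adjoint_clauses[OF lg] gh inner_commute)
  then show ?thesis by (metis vector_eq_ldot)
qed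

lemma exp_tangent:
  fixes Hs :: "nat \<Rightarrow> 'n::finite HH set" and a :: "real^'n \<Rightarrow> real^'n"
  assumes lin: "linear a" and ds: "dsS Hs" and p: "p \<le> 3"
  shows "tvec (\<lambda>t. actD (lexp (\<lambda>u. t *\<^sub>R a u)) Hs) p x = hat a (proj Hs p x) - proj Hs p (hat a x)"
proof -
  define g where "g t = lexp (\<lambda>u. t *\<^sub>R a u)" for t :: real
  define h where "h t = lexp (\<lambda>u. (- t) *\<^sub>R a u)" for t :: real
  have lg: "linear (g t)" for t unfolding g_def by (rule lexp_linear[OF lin])
  have lh: "linear (h t)" for t unfolding h_def by (rule lexp_linear[OF lin])
  have gh: "g t (h t u) = u" for t u unfolding g_def h_def by (rule lexp_inverse[OF lin])
  have hg: "h t (g t u) = u" for t u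
    using lexp_inverse[OF lin, of "- t" u] unfolding g_def h_def by (simp only: minus_minus)
  have ig: "inv (g t) = h t" for t
    by (rule inv_unique_comp) (auto simp: gh hg)
  have ih: "inv (h t) = g t" for t
    by (rule inv_unique_comp) (auto simp: gh hg)
  have actg: "act (g t) v = (g t (fst v), adjoint (h t) (snd v))" for t v by (simp add: act_def ig)
  have acth: "act (h t) v = (h t (fst v), adjoint (g t) (snd v))" for t v by (simp add: act_def ih)
  have lag: "linear (act (g t))" for t
    unfolding actg by (rule linearI) (simp_all add: linear_add[OF lg] linear_scale[OF lg]
        linear_add[OF adjoint_linear[OF lh]] linear_scale[OF adjoint_linear[OF lh]])
  have lah: "linear (act (h t))" for t
    unfolding acth by (rule linearI) (simp_all add: linear_add[OF lh] linear_scale[OF lh]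
        linear_add[OF adjoint_linear[OF lg]] linear_scale[OF adjoint_linear[OF lg]])
  have agh: "act (g t) (act (h t) v) = v" for t v
    by (simp add: actg acth gh adj_inv[OF lg lh gh] prod_eq_iff)
  have ahg: "act (h t) (act (g t) v) = v" for t v
    by (simp add: actg acth hg adj_inv[OF lh lg hg] prod_eq_iff)
  have pe: "proj (actD (g t) Hs) p x = act (g t) (proj Hs p (act (h t) x))" for t
    unfolding actD_def by (rule proj_act[OF ds lag lah agh ahg p])
  have dg: "((\<lambda>t. g t u) has_vector_derivative a u) (at 0)" for u
    unfolding g_def by (rule lexp_deriv[OF lin])
  have dh: "((\<lambda>t. h t u) has_vector_derivative - a u) (at 0)" for u
    unfolding h_def by (rule lexp_deriv_neg[OF lin])
  have dadj: "((\<lambda>t. adjoint (k t) y) has_vector_derivative (\<Sum>i\<in>Basis. (y \<bullet> k' i) *\<^sub>R i)) (at 0)"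
    if lk: "\<And>t. linear (k t)" and dk: "\<And>u. ((\<lambda>t. k t u) has_vector_derivative k' u) (at 0)"
    for k :: "real \<Rightarrow> real^'n \<Rightarrow> real^'n" and k' y
  proof -
    have di: "((\<lambda>t. y \<bullet> k t i) has_field_derivative (y \<bullet> k' i)) (at 0)" for i
      using bounded_linear.has_vector_derivative[OF bounded_linear_inner_right dk[of i]]
      by (simp add: has_real_derivative_iff_has_vector_derivative)
    have "((\<lambda>t. \<Sum>i\<in>Basis. (y \<bullet> k t i) *\<^sub>R i) has_vector_derivative (\<Sum>i\<in>Basis. (y \<bullet> k' i) *\<^sub>R i)) (at 0)"
      by (rule has_vector_derivative_sum) (use has_vector_derivative_scaleR[OF di has_vector_derivative_const] in simp)
    then show ?thesis by (simp add: adj_rep[OF lk])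
  qed
  have adja: "adjoint a y = (\<Sum>i\<in>Basis. (y \<bullet> a i) *\<^sub>R i)" for y by (rule adj_rep[OF lin])
  have dadjh: "((\<lambda>t. adjoint (h t) y) has_vector_derivative - adjoint a y) (at 0)" for y
  proof -
    have "- adjoint a y = (\<Sum>i\<in>Basis. (y \<bullet> (- a i)) *\<^sub>R i)"
      by (simp add: adja sum_negf[symmetric])
    then show ?thesis using dadj[OF lh dh, of y] by simp
  qed
  have dadjg: "((\<lambda>t. adjoint (g t) y) has_vector_derivative adjoint a y) (at 0)" for y
    using dadj[OF lg dg, of y] by (simp add: adja)
  have dF: "((\<lambda>t. act (g t) v) has_vector_derivative hat a v) (at 0)" for v
    unfolding actg hat_def by (rule has_vector_derivative_Pair[OF dg dadjh])
  have dH: "((\<lambda>t. act (h t) v) has_vector_derivative - hat a v) (at 0)" for v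
  proof -
    have "- hat a v = (- a (fst v), adjoint a (snd v))" by (simp add: hat_def)
    then show ?thesis unfolding acth by (simp only:) (rule has_vector_derivative_Pair[OF dh dadjg])
  qed
  have blP: "bounded_linear (proj Hs p)"
    using proj_linear[OF ds p] linear_conv_bounded_linear by blast
  have dy: "((\<lambda>t. proj Hs p (act (h t) x)) has_vector_derivative proj Hs p (- hat a x)) (at 0)"
    by (rule bounded_linear.has_vector_derivative[OF blP dH])
  have g0: "g 0 u = u" for u unfolding g_def by (rule lexp_zero)
  have h0: "h 0 u = u" for u unfolding h_def using lexp_zero[of a u] by simp
  have adid: "adjoint (\<lambda>u. u) y = (y::real^'n)" for y
    using adj_rep[of "\<lambda>u. u" y] by (simp add: euclidean_representation linear_id[unfolded id_def])
  have g0f: "g 0 = (\<lambda>u. u)" "h 0 = (\<lambda>u. u)" using g0 h0 by auto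
  have a0: "act (g 0) v = v" "act (h 0) v = v" for v
    by (simp_all only: actg acth) (simp_all add: g0f adid)
  have "((\<lambda>t. act (g t) (proj Hs p (act (h t) x))) has_vector_derivative
        hat a (proj Hs p (act (h 0) x)) + act (g 0) (proj Hs p (- hat a x))) (at 0)"
    by (rule deriv_apply[OF _ dF dy]) (simp add: lag)
  then have "((\<lambda>t. proj (actD (g t) Hs) p x) has_vector_derivative
        hat a (proj Hs p x) - proj Hs p (hat a x)) (at 0)"
    by (simp add: pe a0 linear_neg[OF proj_linear[OF ds p]])
  then show ?thesis unfolding tvec_def g_def by (rule vector_derivative_at)
qed


lemma Fset_rep:
  assumes D: "inD Hs" and p: "p \<le> 3" and z: "z \<in> Fset Hs p"
  shows "z = (\<Sum>q\<in>{p..3}. proj Hs q z)"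
proof -
  have ds: "dsS Hs" using D by (rule inD_dsS)
  have sub: "\<forall>q\<le>3. subspace (Hs q)" using ds unfolding dsS_def by (rule conjunct2)
  obtain f where f: "\<forall>q\<in>{p..3}. f q \<in> Hs q" and zf: "z = (\<Sum>q=p..3. f q)"
    using z unfolding Fset_def by blast
  define g where "g q = (if q \<in> {p..3} then f q else 0)" for q
  have h1: "\<forall>q\<le>3. g q \<in> Hs q"
    using f sub by (auto simp: g_def subspace_0)
  have e: "{..3::nat} \<inter> {p..3} = {p..3}" using p by auto
  have "(\<Sum>q\<le>3. if q \<in> {p..3} then f q else 0) = sum f ({..3} \<inter> {p..3})"
    by (rule sum.inter_restrict[OF finite_atMost, symmetric])
  then have h2: "z = (\<Sum>q\<le>3. g q)"
    unfolding g_def e zf by simp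
  have "(\<Sum>q\<in>{p..3}. proj Hs q z) = (\<Sum>q\<in>{p..3}. f q)"
  proof (rule sum.cong)
    fix q assume q: "q \<in> {p..3}"
    then have "proj Hs q z = g q" using proj_char[OF ds h1 h2] by auto
    then show "proj Hs q z = f q" using q by (simp add: g_def)
  qed simp
  then show ?thesis using zf by simp
qed

locale crv =
  fixes Hs :: "nat \<Rightarrow> 'n::finite HH set" and c :: "real \<Rightarrow> nat \<Rightarrow> 'n HH set"
  assumes HD: "inD Hs" and TC: "tcurve Hs c"
begin

lemma ev: "\<forall>\<^sub>F t in nhds 0. inD (c t)" using TC unfolding tcurve_def by blast
lemma c0: "p \<le> 3 \<Longrightarrow> c 0 p = Hs p" using TC unfolding tcurve_def by blast
lemma pc0: "proj (c 0) = proj Hs" by (rule proj_cong) (simp add: c0)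
lemma ds: "dsS Hs" using HD by (rule inD_dsS)

lemma hvd: assumes "p \<le> 3" shows "((\<lambda>t. proj (c t) p x) has_vector_derivative tvec c p x) (at 0)"
proof -
  have "(\<lambda>t. proj (c t) p x) differentiable (at 0)" using TC assms unfolding tcurve_def by blast
  then show ?thesis unfolding tvec_def by (rule vector_derivative_works[THEN iffD1])
qed

lemma evlin: "p \<le> 3 \<Longrightarrow> \<forall>\<^sub>F t in nhds 0. linear (proj (c t) p)"
  using ev by (rule eventually_mono) (rule proj_linear[OF inD_dsS])

lemma Dlin: "p \<le> 3 \<Longrightarrow> linear (tvec c p)"
  by (rule deriv_linear[OF evlin hvd])

lemma Dsum: "tvec c 0 x + tvec c 1 x + tvec c 2 x + tvec c 3 x = 0"
proof -
  have d: "((\<lambda>t. \<Sum>q\<le>3. proj (c t) q x) has_vector_derivative (\<Sum>q\<le>3. tvec c q x)) (at 0)"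
    by (rule has_vector_derivative_sum) (rule hvd, simp)
  have e: "\<forall>\<^sub>F t in nhds 0. (\<Sum>q\<le>3. proj (c t) q x) = x"
    using ev by (rule eventually_mono) (rule proj_sum[OF inD_dsS])
  have "(\<Sum>q\<le>3. tvec c q x) = 0"
    by (rule vd_unique_ev[OF e d has_vector_derivative_const])
  then show ?thesis by (simp add: sum4)
qed

lemma DP: assumes p: "p \<le> 3" and q: "q \<le> 3"
  shows "tvec c p (proj Hs q x) + proj Hs p (tvec c q x) = (if p = q then tvec c p x else 0)"
proof -
  have d1: "((\<lambda>t. proj (c t) p (proj (c t) q x)) has_vector_derivative
      tvec c p (proj Hs q x) + proj Hs p (tvec c q x)) (at 0)"
    using deriv_apply[OF evlin[OF p] hvd[OF p] hvd[OF q]] by (simp add: pc0)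
  have e: "\<forall>\<^sub>F t in nhds 0. proj (c t) p (proj (c t) q x) = (if p = q then proj (c t) q x else 0)"
    using ev by (rule eventually_mono) (rule proj_proj[OF inD_dsS p q])
  show ?thesis
  proof (cases "p = q")
    case True
    then show ?thesis using vd_unique_ev[OF _ d1 hvd[OF q]] e by simp
  next
    case False
    then show ?thesis using vd_unique_ev[OF _ d1 has_vector_derivative_const] e by simp
  qed
qed

lemma Dio: assumes p: "p \<le> 3" shows "tvec c (3 - p) x = iota (tvec c p (iota x))"
proof -
  have d2: "((\<lambda>t. iota (proj (c t) p (iota x))) has_vector_derivative iota (tvec c p (iota x))) (at 0)"
    by (rule bounded_linear.has_vector_derivative[OF bounded_linear_iota hvd[OF p]])
  have e: "\<forall>\<^sub>F t in nhds 0. proj (c t) (3 - p) x = iota (proj (c t) p (iota x))"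
    using ev by (rule eventually_mono) (rule inD_io[OF _ p])
  show ?thesis using vd_unique_ev[OF e hvd d2] by simp
qed

lemma bl_Bf1: "bounded_linear (\<lambda>v. Bf v y)"
proof -
  have "linear (\<lambda>v. Bf v y)" by (rule linearI) simp_all
  then show ?thesis using linear_conv_bounded_linear by blast
qed
lemma bl_Bf2: "bounded_linear (\<lambda>v. Bf y v)"
proof -
  have "linear (\<lambda>v. Bf y v)" by (rule linearI) simp_all
  then show ?thesis using linear_conv_bounded_linear by blast
qed

lemma DB: assumes p: "p \<le> 3" shows "Bf (tvec c p x) y = Bf x (tvec c p y)"
proof -
  have d1: "((\<lambda>t. Bf (proj (c t) p x) y) has_vector_derivative Bf (tvec c p x) y) (at 0)"
    by (rule bounded_linear.has_vector_derivative[OF bl_Bf1 hvd[OF p]])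
  have d2: "((\<lambda>t. Bf x (proj (c t) p y)) has_vector_derivative Bf x (tvec c p y)) (at 0)"
    by (rule bounded_linear.has_vector_derivative[OF bl_Bf2 hvd[OF p]])
  have e: "\<forall>\<^sub>F t in nhds 0. Bf (proj (c t) p x) y = Bf x (proj (c t) p y)"
    using ev by (rule eventually_mono) (rule inD_PB[OF _ p])
  show ?thesis using vd_unique_ev[OF e d1 d2] .
qed

lemma is_tang: "tang Hs (proj Hs) (tvec c)"
proof (rule tang.intro)
  fix p q :: nat and x y :: "'n HH"
  show "linear (proj Hs p)" if "p \<le> 3" using that by (rule proj_linear[OF ds])
  show "linear (tvec c p)" if "p \<le> 3" using that by (rule Dlin)
  show "proj Hs 0 x + proj Hs 1 x + proj Hs 2 x + proj Hs 3 x = x" using proj_sum[OF ds, of x] by (simp add: sum4)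
  show "proj Hs p (proj Hs q x) = (if p = q then proj Hs q x else 0)" if "p \<le> 3" "q \<le> 3"
    using that by (rule proj_proj[OF ds])
  show "proj Hs (3 - p) x = iota (proj Hs p (iota x))" if "p \<le> 3" using that by (rule inD_io[OF HD])
  show "Bf (proj Hs p x) y = Bf x (proj Hs p y)" if "p \<le> 3" using that by (rule inD_PB[OF HD])
  show "tvec c 0 x + tvec c 1 x + tvec c 2 x + tvec c 3 x = 0" by (rule Dsum)
  show "tvec c p (proj Hs q x) + proj Hs p (tvec c q x) = (if p = q then tvec c p x else 0)" if "p \<le> 3" "q \<le> 3"
    using that by (rule DP)
  show "tvec c (3 - p) x = iota (tvec c p (iota x))" if "p \<le> 3" using that by (rule Dio)
  show "Bf (tvec c p x) y = Bf x (tvec c p y)" if "p \<le> 3" using that by (rule DB)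
  show "proj Hs p x \<in> Hs p" if "p \<le> 3" using that by (rule proj_in[OF ds])
  show "proj Hs p x = (if p = q then x else 0)" if "p \<le> 3" "q \<le> 3" "x \<in> Hs q"
    using that by (rule proj_mem[OF ds])
  show "proj Hs p x = proj Hs p x" if "p \<le> 3" by (rule refl)
qed

sublocale tang Hs "proj Hs" "tvec c" by (rule is_tang)

lemma phi_eq:
  assumes p: "p \<le> 3" and w: "w \<in> Hs p"
  shows "phi c p w = (\<Sum>r<p. proj Hs r (tvec c p w))"
proof -
  define v0 where "v0 = (\<Sum>r<p. proj Hs r (tvec c p w))"
  have Pw: "proj Hs q w = (if q = p then w else 0)" if "q \<le> 3" for q
    using Pmem[OF that p w] by simp
  have key: "projAlongF (c 0) p (vector_derivative wt (at 0)) = v0"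
    if ew: "\<forall>\<^sub>F t in nhds 0. wt t \<in> Fset (c t) p" and w0: "wt 0 = w"
      and dw: "wt differentiable (at 0)" for wt
  proof -
    define wd where "wd = vector_derivative wt (at 0)"
    have hw: "(wt has_vector_derivative wd) (at 0)"
      unfolding wd_def using dw by (rule vector_derivative_works[THEN iffD1])
    have e: "\<forall>\<^sub>F t in nhds 0. (\<Sum>q\<in>{p..3}. proj (c t) q (wt t)) = wt t"
      using ev ew by eventually_elim (rule Fset_rep[OF _ p, symmetric])
    have d: "((\<lambda>t. \<Sum>q\<in>{p..3}. proj (c t) q (wt t)) has_vector_derivative
        (\<Sum>q\<in>{p..3}. tvec c q w + proj Hs q wd)) (at 0)"
    proof (rule has_vector_derivative_sum)
      fix q assume "q \<in> {p..3}"
      then have q: "q \<le> 3" by simp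
      show "((\<lambda>t. proj (c t) q (wt t)) has_vector_derivative tvec c q w + proj Hs q wd) (at 0)"
        using deriv_apply[OF evlin[OF q] hvd[OF q] hw] by (simp add: pc0 w0)
    qed
    have wd_eq: "(\<Sum>q\<in>{p..3}. tvec c q w + proj Hs q wd) = wd"
      by (rule vd_unique_ev[OF e d hw])
    have r_eq: "proj Hs r wd = proj Hs r (tvec c p w)" if r: "r < p" for r
    proof -
      have r3: "r \<le> 3" using r p by simp
      have "proj Hs r wd = (\<Sum>q\<in>{p..3}. proj Hs r (tvec c q w) + proj Hs r (proj Hs q wd))"
        by (subst wd_eq[symmetric]) (simp add: linear_sum[OF Plin[OF r3]] linear_add[OF Plin[OF r3]])
      also have "\<dots> = (\<Sum>q\<in>{p..3}. if q = p then proj Hs r (tvec c p w) else 0)"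
      proof (rule sum.cong)
        fix q assume "q \<in> {p..3}"
        then have q: "q \<le> 3" and rq: "r \<noteq> q" using r by auto
        have a: "proj Hs r (proj Hs q wd) = 0" using PP[OF r3 q] rq by simp
        have b: "proj Hs r (tvec c q w) = - tvec c r (proj Hs q w)" by (rule PD_off[OF r3 q rq])
        show "proj Hs r (tvec c q w) + proj Hs r (proj Hs q wd) = (if q = p then proj Hs r (tvec c p w) else 0)"
          using a b Pw[OF q] linear_0[OF Dlin[OF r3]] by auto
      qed simp
      also have "\<dots> = proj Hs r (tvec c p w)" using p by (simp add: sum.delta)
      finally show ?thesis .
    qed
    show ?thesis unfolding projAlongF_def pc0 wd_def[symmetric] v0_def
      by (rule sum.cong) (simp_all add: r_eq)
  qed
  define wt0 where "wt0 t = (\<Sum>q\<in>{p..3}. proj (c t) q w)" for t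
  have ew0: "\<forall>\<^sub>F t in nhds 0. wt0 t \<in> Fset (c t) p"
    using ev
  proof (rule eventually_mono)
    fix t assume D: "inD (c t)"
    show "wt0 t \<in> Fset (c t) p"
      unfolding Fset_def wt0_def
    proof (rule CollectI, rule exI[where x="\<lambda>q. proj (c t) q w"], intro conjI ballI)
      fix q assume "q \<in> {p..3}"
      then show "proj (c t) q w \<in> c t q" by (intro proj_in[OF inD_dsS[OF D]]) simp
    qed simp
  qed
  have w00: "wt0 0 = w"
  proof -
    have "wt0 0 = (\<Sum>q\<in>{p..3}. if q = p then w else 0)"
      unfolding wt0_def pc0 by (rule sum.cong) (simp_all add: Pw)
    then show ?thesis using p by (simp add: sum.delta)
  qed
  have dw0: "wt0 differentiable (at 0)"
  proof -
    have "(wt0 has_vector_derivative (\<Sum>q\<in>{p..3}. tvec c q w)) (at 0)"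
      unfolding wt0_def by (rule has_vector_derivative_sum) (rule hvd, simp)
    then show ?thesis by (rule differentiableI_vector)
  qed
  show ?thesis unfolding phi_def v0_def[symmetric]
  proof (rule the_equality)
    show "\<forall>wt. (\<forall>\<^sub>F t in nhds 0. wt t \<in> Fset (c t) p) \<and> wt 0 = w \<and> wt differentiable at 0 \<longrightarrow>
        projAlongF (c 0) p (vector_derivative wt (at 0)) = v0"
      using key by blast
  next
    fix v assume "\<forall>wt. (\<forall>\<^sub>F t in nhds 0. wt t \<in> Fset (c t) p) \<and> wt 0 = w \<and> wt differentiable at 0 \<longrightarrow>
        projAlongF (c 0) p (vector_derivative wt (at 0)) = v"
    then have "projAlongF (c 0) p (vector_derivative wt0 (at 0)) = v" using ew0 w00 dw0 by blast
    then show "v = v0" using key[OF ew0 w00 dw0] by simp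
  qed
qed

lemma lt3: "{..<3::nat} = {0,1,2}" by auto
lemma lt2: "{..<2::nat} = {0,1}" by auto
lemma lt1: "{..<1::nat} = {0}" by auto

lemma phi3: "w \<in> Hs 3 \<Longrightarrow> phi c 3 w = proj Hs 0 (tvec c 3 w) + proj Hs 1 (tvec c 3 w) + proj Hs 2 (tvec c 3 w)"
  using phi_eq[of 3 w] by (simp add: lt3 add.assoc)
lemma phi2: "w \<in> Hs 2 \<Longrightarrow> phi c 2 w = proj Hs 0 (tvec c 2 w) + proj Hs 1 (tvec c 2 w)"
  using phi_eq[of 2 w] by (simp add: lt2)
lemma phi1: "w \<in> Hs 1 \<Longrightarrow> phi c 1 w = proj Hs 0 (tvec c 1 w)"
  using phi_eq[of 1 w] by (simp add: lt1)

lemma tang_exp: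
  assumes "is_exp_tangent Hs c a" "linear a" "p \<le> 3"
  shows "tvec c p x = hat a (proj Hs p x) - proj Hs p (hat a x)"
  using assms exp_tangent[OF assms(2) ds assms(3)] unfolding is_exp_tangent_def by metis

lemma anti_J_blocks:
  assumes lT: "linear T" and aJ: "\<And>v. J (T v) = - T (J v)"
  shows "proj Hs 1 (T (proj Hs 3 w)) = 0" "proj Hs 0 (T (proj Hs 2 w)) = 0"
proof -
  have TJ: "T (J v) = - J (T v)" for v using aJ[of v] by (simp add: minus_equation_iff)
  have "proj Hs 1 (T (proj Hs 3 w)) = proj Hs 1 (T (J (proj Hs 3 w)))" by simp
  also have "\<dots> = proj Hs 1 (- J (T (proj Hs 3 w)))" by (simp only: TJ)
  also have "\<dots> = - proj Hs 1 (T (proj Hs 3 w))" by simp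
  finally show "proj Hs 1 (T (proj Hs 3 w)) = 0" by (rule self_neg_zero)
  have "proj Hs 0 (T (proj Hs 2 w)) = proj Hs 0 (T (- J (proj Hs 2 w)))" by simp
  also have "\<dots> = - proj Hs 0 (T (J (proj Hs 2 w)))" by (simp add: linear_neg[OF lT])
  also have "\<dots> = - proj Hs 0 (- J (T (proj Hs 2 w)))" by (simp only: TJ)
  also have "\<dots> = - proj Hs 0 (T (proj Hs 2 w))" by simp
  finally show "proj Hs 0 (T (proj Hs 2 w)) = 0" by (rule self_neg_zero)
qed

lemma H1_of_phi3:
  assumes "phi c 3 ` Hs 3 \<subseteq> {a + b | a b. a \<in> Hs 2 \<and> b \<in> Hs 0}"
  shows "proj Hs 1 (tvec c 3 (proj Hs 3 w)) = 0"
proof -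
  have w3: "proj Hs 3 w \<in> Hs 3" by (rule Pin) simp
  then obtain a b where ab: "phi c 3 (proj Hs 3 w) = a + b" "a \<in> Hs 2" "b \<in> Hs 0" using assms by blast
  have "proj Hs 1 (phi c 3 (proj Hs 3 w)) = 0"
    using ab Pmem[of 1 2 a] Pmem[of 1 0 b] by simp
  then show ?thesis by (simp add: phi3[OF w3])
qed

lemma P0_of_phi3:
  assumes "phi c 3 ` Hs 3 \<subseteq> Hs 2"
  shows "proj Hs 0 (tvec c 3 (proj Hs 3 w)) = 0"
proof -
  have w3: "proj Hs 3 w \<in> Hs 3" by (rule Pin) simp
  then have "phi c 3 (proj Hs 3 w) \<in> Hs 2" using assms by blast
  then have "proj Hs 0 (phi c 3 (proj Hs 3 w)) = 0" using Pmem[of 0 2] by simp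
  then show ?thesis by (simp add: phi3[OF w3])
qed

lemma build_s:
  assumes H1: "\<And>w. proj Hs 1 (tvec c 3 (proj Hs 3 w)) = 0"
  obtains s where "linear s" "qselfadj Hs s" "is_exp_tangent Hs c s" "S = hat s"
proof -
  obtain s where ls: "linear s" and Sh: "S = hat s"
    using hat_exists[OF linear_S S_io S_skew] by blast
  have "is_exp_tangent Hs c s"
    unfolding is_exp_tangent_def
  proof (intro allI impI)
    fix p :: nat and x assume p: "p \<le> 3"
    show "tvec c p x = tvec (\<lambda>t. actD (lexp (\<lambda>u. t *\<^sub>R s u)) Hs) p x"
      using exp_tangent[OF ls ds p, of x] D_S[OF H1 p, of x] by (simp add: Sh)
  qed
  then show ?thesis using that ls S_qselfadj[OF ls Sh] Sh by blast
qed

lemma ell_mem: "w \<in> Hs 3 \<Longrightarrow> fst (w + iota w) \<in> ell Hs \<and> w + iota w = (fst (w + iota w), 0)"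
  unfolding ell_def by (auto simp: prod_eq_iff)

lemma qHb_hat: "linear a \<Longrightarrow> w \<in> Hs 3 \<Longrightarrow>
   qHb Hs (a (fst (w + iota w))) (fst (w + iota w)) = - 2 * Bf (proj Hs 0 (hat a w)) (iota w)"
proof -
  assume la: "linear a" and w: "w \<in> Hs 3"
  define u where "u = fst (w + iota w)"
  have wu: "w + iota w = (u, 0)" using ell_mem[OF w] by (simp add: u_def)
  have "qHb Hs (a u) u = Bf (J (hat a (u, 0))) (u, 0)"
    by (simp add: qHb_J hat_def linear_0[OF adjoint_linear[OF la]])
  also have "\<dots> = Bf (J (hat a (w + iota w))) (w + iota w)" by (simp add: wu)
  also have "\<dots> = - 2 * Bf (proj Hs 0 (hat a w)) (iota w)"
    by (rule form_ell[OF linear_hat[OF la] hat_io[OF la] hat_skew[OF la] w])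
  finally show ?thesis by (simp add: u_def)
qed

lemma dim1:
  obtains w0 where "w0 \<in> Hs 3" "w0 \<noteq> 0" "\<forall>w\<in>Hs 3. \<exists>k. w = k *\<^sub>R w0"
proof -
  have sub: "subspace (Hs 3)" and d: "dim (Hs 3) = 1" using HD unfolding inD_def by auto
  obtain B where B: "B \<subseteq> Hs 3" "independent B" "Hs 3 \<subseteq> span B" "card B = dim (Hs 3)"
    by (rule basis_exists)
  then obtain w0 where Bw: "B = {w0}" using d card_1_singletonE by metis
  have "w0 \<noteq> 0" using B(2) Bw by (auto simp: dependent_single)
  moreover have "\<forall>w\<in>Hs 3. \<exists>k. w = k *\<^sub>R w0" using B(3) Bw by (auto simp: span_singleton)
  ultimately show ?thesis using that B(1) Bw by blast
qed

lemma P0T_zero: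
  assumes lT: "linear T" and ellc: "\<forall>w\<in>Hs 3. Bf (proj Hs 0 (T w)) (iota w) = 0"
    and w: "w \<in> Hs 3"
  shows "proj Hs 0 (T w) = 0"
proof -
  obtain w0 where w0: "w0 \<in> Hs 3" "w0 \<noteq> 0" and sp: "\<forall>w\<in>Hs 3. \<exists>k. w = k *\<^sub>R w0" by (rule dim1)
  have H0: "Hs 0 = iota ` Hs 3" using HD unfolding inD_def by (metis diff_self_eq_0 order_refl)
  have pos: "\<forall>y\<in>Hs 0. y \<noteq> 0 \<longrightarrow> (-1::real) ^ (0 + 1) * Qf (iota y) y > 0"
    using HD unfolding inD_def by blast
  have iw0: "iota w0 \<in> Hs 0" "iota w0 \<noteq> 0" using H0 w0 by auto
  have neg: "Bf (iota w0) (iota w0) \<noteq> 0"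
    using pos iw0 by (auto simp: Qf_Bf)
  have "proj Hs 0 (T w0) \<in> Hs 0" by (rule Pin) simp
  then obtain z where z: "z \<in> Hs 3" "proj Hs 0 (T w0) = iota z" using H0 by blast
  then obtain k where k: "z = k *\<^sub>R w0" using sp by blast
  have "Bf (proj Hs 0 (T w0)) (iota w0) = k * Bf (iota w0) (iota w0)" by (simp add: z k)
  then have "k = 0" using ellc w0(1) neg by simp
  then have z0: "proj Hs 0 (T w0) = 0" using z k by simp
  obtain m where "w = m *\<^sub>R w0" using sp w by blast
  then show ?thesis using z0 by (simp add: linear_scale[OF lT] linear_scale[OF Plin[OF le3(1)]])
qed

lemma D_T:
  assumes "\<And>p x. p \<le> 3 \<Longrightarrow> tvec c p x = T (proj Hs p x) - proj Hs p (T x)"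
    and p: "p \<le> 3" and r: "r \<le> 3" "r \<noteq> p" and w: "w \<in> Hs p"
  shows "proj Hs r (tvec c p w) = proj Hs r (T w)"
proof -
  have "proj Hs p w = w" using Pmem[OF p p w] by simp
  then show ?thesis using assms(1)[OF p, of w] PP[OF r(1) p] r(2) linear_diff[OF Plin[OF r(1)]] by simp
qed

lemma horiz_fwd:
  assumes "horizontal Hs c"
  shows "phi c 3 ` Hs 3 \<subseteq> {a + b | a b. a \<in> Hs 2 \<and> b \<in> Hs 0} \<and> phi c 2 ` Hs 2 \<subseteq> Hs 1"
proof -
  obtain a where sa: "qselfadj Hs a" and te: "is_exp_tangent Hs c a" using assms unfolding horizontal_def by blast
  have la: "linear a" using sa unfolding qselfadj_def by blast
  have DT: "\<And>p x. p \<le> 3 \<Longrightarrow> tvec c p x = hat a (proj Hs p x) - proj Hs p (hat a x)"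
    by (rule tang_exp[OF te la])
  have aJ: "\<And>v. J (hat a v) = - hat a (J v)" by (rule qselfadj_J[OF la sa])
  note blk = anti_J_blocks[OF linear_hat[OF la] aJ]
  have "phi c 3 w \<in> {a + b | a b. a \<in> Hs 2 \<and> b \<in> Hs 0}" if w: "w \<in> Hs 3" for w
  proof -
    have w3: "proj Hs 3 w = w" using Pmem[of 3 3 w] w by simp
    have "phi c 3 w = proj Hs 0 (hat a w) + proj Hs 1 (hat a w) + proj Hs 2 (hat a w)"
      using phi3[OF w] D_T[OF DT, of 3 0 w] D_T[OF DT, of 3 1 w] D_T[OF DT, of 3 2 w] w by simp
    also have "proj Hs 1 (hat a w) = 0" using blk(1)[of w] w3 by simp
    finally have "phi c 3 w = proj Hs 2 (hat a w) + proj Hs 0 (hat a w)" by simp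
    moreover have "proj Hs 2 (hat a w) \<in> Hs 2" "proj Hs 0 (hat a w) \<in> Hs 0" by (rule Pin, simp)+
    ultimately show ?thesis by blast
  qed
  moreover have "phi c 2 w \<in> Hs 1" if w: "w \<in> Hs 2" for w
  proof -
    have w2: "proj Hs 2 w = w" using Pmem[of 2 2 w] w by simp
    have "phi c 2 w = proj Hs 0 (hat a w) + proj Hs 1 (hat a w)"
      using phi2[OF w] D_T[OF DT, of 2 0 w] D_T[OF DT, of 2 1 w] w by simp
    also have "proj Hs 0 (hat a w) = 0" using blk(2)[of w] w2 by simp
    finally show ?thesis by (simp add: Pin)
  qed
  ultimately show ?thesis by blast
qed

lemma horiz_bwd:
  assumes "phi c 3 ` Hs 3 \<subseteq> {a + b | a b. a \<in> Hs 2 \<and> b \<in> Hs 0}"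
  shows "horizontal Hs c"
proof -
  obtain s where "linear s" "qselfadj Hs s" "is_exp_tangent Hs c s" "S = hat s"
    using build_s[OF H1_of_phi3[OF assms]] by blast
  then show ?thesis unfolding horizontal_def by blast
qed

lemma trans_fwd:
  assumes "transverse Hs c"
  shows "phi c 3 ` Hs 3 \<subseteq> Hs 2"
proof -
  obtain a where sa: "qselfadj Hs a" and el: "\<forall>u\<in>ell Hs. qHb Hs (a u) u = 0"
    and te: "is_exp_tangent Hs c a" using assms unfolding transverse_def by blast
  have la: "linear a" using sa unfolding qselfadj_def by blast
  have DT: "\<And>p x. p \<le> 3 \<Longrightarrow> tvec c p x = hat a (proj Hs p x) - proj Hs p (hat a x)"
    by (rule tang_exp[OF te la])
  have aJ: "\<And>v. J (hat a v) = - hat a (J v)" by (rule qselfadj_J[OF la sa])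
  note blk = anti_J_blocks[OF linear_hat[OF la] aJ]
  have ellc: "\<forall>w\<in>Hs 3. Bf (proj Hs 0 (hat a w)) (iota w) = 0"
  proof
    fix w assume w: "w \<in> Hs 3"
    have "qHb Hs (a (fst (w + iota w))) (fst (w + iota w)) = 0" using el ell_mem[OF w] by blast
    then show "Bf (proj Hs 0 (hat a w)) (iota w) = 0" using qHb_hat[OF la w] by simp
  qed
  show ?thesis
  proof
    fix y assume "y \<in> phi c 3 ` Hs 3"
    then obtain w where w: "w \<in> Hs 3" and y: "y = phi c 3 w" by blast
    have w3: "proj Hs 3 w = w" using Pmem[of 3 3 w] w by simp
    have "phi c 3 w = proj Hs 0 (hat a w) + proj Hs 1 (hat a w) + proj Hs 2 (hat a w)"
      using phi3[OF w] D_T[OF DT, of 3 0 w] D_T[OF DT, of 3 1 w] D_T[OF DT, of 3 2 w] w by simp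
    also have "proj Hs 1 (hat a w) = 0" using blk(1)[of w] w3 by simp
    also have "proj Hs 0 (hat a w) = 0" by (rule P0T_zero[OF linear_hat[OF la] ellc w])
    finally show "y \<in> Hs 2" using y by (simp add: Pin)
  qed
qed

lemma trans_bwd:
  assumes A: "phi c 3 ` Hs 3 \<subseteq> Hs 2"
  shows "transverse Hs c"
proof -
  have A': "phi c 3 ` Hs 3 \<subseteq> {a + b | a b. a \<in> Hs 2 \<and> b \<in> Hs 0}"
  proof
    fix y assume "y \<in> phi c 3 ` Hs 3"
    then have "y \<in> Hs 2" using A by blast
    moreover have "(0::'n HH) \<in> Hs 0" using Pin[OF le3(1), of 0] Pzero[OF le3(1)] by simp
    ultimately have "y = y + 0 \<and> y \<in> Hs 2 \<and> (0::'n HH) \<in> Hs 0" by simp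
    then show "y \<in> {a + b | a b. a \<in> Hs 2 \<and> b \<in> Hs 0}" by blast
  qed
  have H1: "\<And>w. proj Hs 1 (tvec c 3 (proj Hs 3 w)) = 0" by (rule H1_of_phi3[OF A'])
  obtain s where ls: "linear s" and sa: "qselfadj Hs s" and te: "is_exp_tangent Hs c s" and Sh: "S = hat s"
    using build_s[OF H1] by blast
  have el: "\<forall>u\<in>ell Hs. qHb Hs (s u) u = 0"
  proof
    fix u assume "u \<in> ell Hs"
    then obtain w where w: "w \<in> Hs 3" and wu: "w + iota w = (u, 0)" unfolding ell_def by blast
    have u: "u = fst (w + iota w)" using wu by simp
    have w3: "proj Hs 3 w = w" using Pmem[of 3 3 w] w by simp
    have "tvec c 3 w = S w - proj Hs 3 (S w)" using D_S[OF H1, of 3 w] w3 by simp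
    then have "proj Hs 0 (S w) = proj Hs 0 (tvec c 3 (proj Hs 3 w))" using w3 by simp
    also have "\<dots> = 0" by (rule P0_of_phi3[OF A])
    finally have "proj Hs 0 (hat s w) = 0" by (simp add: Sh)
    then show "qHb Hs (s u) u = 0" using qHb_hat[OF ls w] u by simp
  qed
  show ?thesis unfolding transverse_def using sa el te by blast
qed

end

theorem mainTheorem15:
  fixes Hs :: "nat \<Rightarrow> ((real^'n) \<times> (real^'n)) set"
    and c :: "real \<Rightarrow> nat \<Rightarrow> ((real^'n) \<times> (real^'n)) set"
  assumes "inD Hs" and "tcurve Hs c"
  shows "(horizontal Hs c \<longleftrightarrow> phi c 3 ` Hs 3 \<subseteq> {a + b | a b. a \<in> Hs 2 \<and> b \<in> Hs 0})
       \<and> (horizontal Hs c \<longrightarrow> phi c 2 ` Hs 2 \<subseteq> Hs 1)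
       \<and> (transverse Hs c \<longleftrightarrow> phi c 3 ` Hs 3 \<subseteq> Hs 2)
       \<and> (transverse Hs c \<longrightarrow> (\<forall>p\<in>{1,2,3}. phi c p ` Hs p \<subseteq> Hs (p - 1)))"
proof -
  interpret crv Hs c using assms by (rule crv.intro)
  have th: "transverse Hs c \<Longrightarrow> horizontal Hs c"
    unfolding transverse_def horizontal_def by blast
  have p1: "phi c 1 ` Hs 1 \<subseteq> Hs 0"
  proof
    fix y assume "y \<in> phi c 1 ` Hs 1"
    then obtain w where w: "w \<in> Hs 1" and y: "y = phi c 1 w" by blast
    show "y \<in> Hs 0" using phi1[OF w] y Pin[of 0] by simp
  qed
  have "transverse Hs c \<longrightarrow> (\<forall>p\<in>{1,2,3}. phi c p ` Hs p \<subseteq> Hs (p - 1))"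
  proof (intro impI ballI)
    fix p :: nat assume t: "transverse Hs c" and p: "p \<in> {1,2,3}"
    have "phi c 2 ` Hs 2 \<subseteq> Hs 1" using horiz_fwd[OF th[OF t]] by blast
    moreover have "phi c 3 ` Hs 3 \<subseteq> Hs 2" using trans_fwd[OF t] .
    ultimately show "phi c p ` Hs p \<subseteq> Hs (p - 1)" using p p1 by (auto simp: One_nat_def)
  qed
  then show ?thesis using horiz_fwd horiz_bwd trans_fwd trans_bwd by blast
qed

end
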